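(* Fix $d\ge 2$, $p\in(0,1)$, $v>0$ and $r$ with $$0<r<\frac{1}{2^{2d-1}}\,\frac{p}{1+(2d-2)(1-p)}.$$ Then there exists $\lambda_0>0$ such that for every $\lambda\ge\lambda_0$ and every $(y,z)\in\vec{\mathbb{E}}_d^s$, $$\mathbb{P}(\underline\zeta_{(y,z)}=1)\ge r.$$
   Context: Let $\mathbb{E}_d$ (resp. $\vec{\mathbb{E}}_d$) be the set of unoriented (resp. oriented) nearest-neighbour edges of $\mathbb{Z}^d$, and $\mathcal N(x)$ the set of the $2d$ neighbours of $x$. Let $e_1$ be the first unit vector, and set $$\vec{\mathbb{E}}_d^s=\{(x,x+e_1): x\in(1+4\mathbb{Z})^d\}\cup\{(x+e_1,x): x\in(1+4\mathbb{Z})^d\}.$$ Given $p,v,\lambda$, consider the following families. All families are independent of each other, and within each family the variables are i.i.d.: - $(T^+_e)_{e\in\mathbb{E}_d}$ with law $\mathrm{Exp}(vp)$; - $(T^-_e)_{e\in\mathbb{E}_d}$ with law $\mathrm{Exp}(v(1-p))$; - $(X_x)_{x\in\mathbb{Z}^d}$ and $(X'_x)_{x\in\mathbb{Z}^d}$ with law $\mathrm{Exp}(1)$; - $(X_{(x,y)})_{(x,y)\in\vec{\mathbb{E}}_d}$ with law $\mathrm{Exp}(\lambda)$; - $(\chi_x)_{x\in\mathbb{Z}^d}$, Poisson point processes on $[0,\infty)$ of intensity $1$; - $(\chi_{\{x,y\}})_{\{x,y\}\in\mathbb{E}_d}$, Poisson point processes of intensity $\lambda$. For $(x,y)\in\vec{\mathbb{E}}_d$,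 the process $(\tilde\eta^{x,y}_t)_{t\ge0}$ of subsets of $\{x,y\}$ is defined as follows. - If $X_{(x,y)}<X_x$, it is the contact process on the two-vertex graph $\{x,y\}$ started from $\{x,y\}$, built by graphical construction. An infected site becomes healthy at each of its recovery marks; at each infection mark, if one endpoint is infected, the other becomes infected. The recovery marks of $x$ are $\{X_x-X_{(x,y)}\}\cup(X_x-X_{(x,y)}+\chi_x)$, the recovery marks of $y$ are $\{X_y\}\cup(X_y+\chi_y)$, and the infection marks are $\chi_{\{x,y\}}$. - If $X_{(x,y)}>X_x$, it is identically empty. For $(y,z)\in\vec{\mathbb{E}}_d^s$ and $x\in\mathcal N(y)\setminus\{z\}$, define $$\zeta^x_{(y,z)}=\mathbf 1_{T^+_{\{y,z\}}<X_y}\mathbf 1_{X_{(y,z)}<\min(X_y-T^+_{\{y,z\}},T^-_{\{y,z\}})}+\mathbf 1_{X_y<T^+_{\{y,z\}}}\mathbf 1_{T^+_{\{y,z\}}<T^-_{\{x,y\}}-X_{(x,y)}}\mathbf 1_{y\in\tilde\eta^{x,y}_{T^+_{\{y,z\}}}}\mathbf 1_{X_{(y,z)}<\min(X'_y,T^-_{\{y,z\}})}$$ and $$\underline\zeta_{(y,z)}=\prod_{x\in\mathcal N(y)\setminus\{z\}}\zeta^x_{(y,z)}.$$ The dependence of these objects on $\lambda$ enters through the laws of $X_{(x,y)}$ and $\chi_{\{x,y\}}$. *)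

theory Defs
  imports "HOL-Probability.Probability"
begin

(* Sites of Z^d are integer lists of length d; unoriented edges {x,y} are
   two-element sets of sites; oriented edges are pairs. *)
type_synonym site = "int list"

definition sites :: "nat \<Rightarrow> site set" where
  "sites d = {x. length x = d}"

definition nbrs :: "nat \<Rightarrow> site \<Rightarrow> site set" where
  "nbrs d x = {y. length y = d \<and> length x = d \<and>
                  (\<Sum>i<d. \<bar>x ! i - y ! i\<bar>) = 1}"

definition e1 :: "nat \<Rightarrow> site" where
  "e1 d = map (\<lambda>i. if i = 0 then 1 else 0) [0..<d]"

definition addv :: "site \<Rightarrow> site \<Rightarrow> site" where
  "addv x y = map2 (+) x y"

definition lattice4 :: "nat \<Rightarrow> site set" where
  "lattice4 d = {x. length x = d \<and> (\<forall>i<d. x ! i mod 4 = 1)}"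

definition Es :: "nat \<Rightarrow> (site \<times> site) set" where
  "Es d = {(x, addv x (e1 d)) | x. x \<in> lattice4 d} \<union> {(addv x (e1 d), x) | x. x \<in> lattice4 d}"

(* Index set of all the random variables.  A Poisson point process is encoded by
   its i.i.d. exponential inter-arrival times (indexed by nat). *)
datatype idx =
    Tp "site set"
  | Tm "site set"
  | Xs site
  | Xs' site
  | Xo "site \<times> site"
  | Cs site nat
  | Ce "site set" nat

fun rate :: "real \<Rightarrow> real \<Rightarrow> real \<Rightarrow> idx \<Rightarrow> real" where
  "rate p v lam (Tp e) = v * p"
| "rate p v lam (Tm e) = v * (1 - p)"
| "rate p v lam (Xs x) = 1"
| "rate p v lam (Xs' x) = 1"
| "rate p v lam (Xo xy) = lam"
| "rate p v lam (Cs x n) = 1"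
| "rate p v lam (Ce e n) = lam"

definition model :: "real \<Rightarrow> real \<Rightarrow> real \<Rightarrow> (idx \<Rightarrow> real) measure" where
  "model p v lam = PiM UNIV (\<lambda>i. density lborel (exponential_density (rate p v lam i)))"

definition ppp :: "(nat \<Rightarrow> real) \<Rightarrow> real set" where
  "ppp E = {(\<Sum>k\<le>n. E k) | n. True}"

definition chi_s :: "(idx \<Rightarrow> real) \<Rightarrow> site \<Rightarrow> real set" where
  "chi_s \<omega> x = ppp (\<lambda>k. \<omega> (Cs x k))"

definition chi_e :: "(idx \<Rightarrow> real) \<Rightarrow> site set \<Rightarrow> real set" where
  "chi_e \<omega> e = ppp (\<lambda>k. \<omega> (Ce e k))"

definition other :: "'s \<Rightarrow> 's \<Rightarrow> 's \<Rightarrow> 's" where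
  "other a b u = (if u = a then b else a)"

(* Graphical construction of the contact process on the two-vertex graph {a,b}:
   infection_path rec infm a b u s ss t w  means: an infection path sitting at u at
   time s, jumping to the other vertex at the successive infection marks ss
   (strictly increasing, in inf), not meeting any recovery mark of the vertex
   it sits on, and reaching w at time t. *)
fun infection_path :: "('s \<Rightarrow> real set) \<Rightarrow> real set \<Rightarrow> 's \<Rightarrow> 's \<Rightarrow> 's \<Rightarrow> real \<Rightarrow> real list \<Rightarrow> real \<Rightarrow> 's \<Rightarrow> bool" where
  "infection_path rec infm a b u s [] t w = (s \<le> t \<and> rec u \<inter> {s<..t} = {} \<and> u = w)"
| "infection_path rec infm a b u s (s' # ss) t w =
     (s < s' \<and> s' \<in> infm \<and> rec u \<inter> {s<..s'} = {} \<and>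
      infection_path rec infm a b (other a b u) s' ss t w)"

definition cp2 :: "('s \<Rightarrow> real set) \<Rightarrow> real set \<Rightarrow> 's \<Rightarrow> 's \<Rightarrow> real \<Rightarrow> 's set" where
  "cp2 rec infm a b t = {w. \<exists>u\<in>{a,b}. \<exists>ss. infection_path rec infm a b u 0 ss t w}"

definition eta :: "(idx \<Rightarrow> real) \<Rightarrow> site \<Rightarrow> site \<Rightarrow> real \<Rightarrow> site set" where
  "eta \<omega> x y t =
    (if \<omega> (Xo (x, y)) < \<omega> (Xs x) then
       cp2 (\<lambda>u. if u = x then
                   {\<omega> (Xs x) - \<omega> (Xo (x, y))} \<union> ((\<lambda>s. \<omega> (Xs x) - \<omega> (Xo (x, y)) + s) ` chi_s \<omega> x)
                 else {\<omega> (Xs y)} \<union> ((\<lambda>s. \<omega> (Xs y) + s) ` chi_s \<omega> y))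
           (chi_e \<omega> {x, y}) x y t
     else {})"

definition ind :: "bool \<Rightarrow> real" where
  "ind b = (if b then 1 else 0)"

definition zeta :: "(idx \<Rightarrow> real) \<Rightarrow> site \<Rightarrow> site \<Rightarrow> site \<Rightarrow> real" where
  "zeta \<omega> x y z =
     (let Tpyz = \<omega> (Tp {y, z}); Tmyz = \<omega> (Tm {y, z}); Xy = \<omega> (Xs y);
          Xyz = \<omega> (Xo (y, z)) in
      ind (Tpyz < Xy) * ind (Xyz < min (Xy - Tpyz) Tmyz)
      + ind (Xy < Tpyz) * ind (Tpyz < \<omega> (Tm {x, y}) - \<omega> (Xo (x, y)))
        * ind (y \<in> eta \<omega> x y Tpyz) * ind (Xyz < min (\<omega> (Xs' y)) Tmyz))"

definition zeta_under :: "nat \<Rightarrow> (idx \<Rightarrow> real) \<Rightarrow> site \<Rightarrow> site \<Rightarrow> real" where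
  "zeta_under d \<omega> y z = (\<Prod>x\<in>nbrs d y - {z}. zeta \<omega> x y z)"

end

theory Submission
  imports Defs "HOL-Probability.Probability" "HOL-Real_Asymp.Real_Asymp"
begin


definition Iinf :: "('s \<Rightarrow> real set) \<Rightarrow> real set \<Rightarrow> 's \<Rightarrow> 's \<Rightarrow> real \<Rightarrow> 's \<Rightarrow> bool" where
  "Iinf rec infm a b \<tau> w = (\<exists>u\<in>{a,b}. \<exists>ss. infection_path rec infm a b u 0 ss \<tau> w)"

lemma ip_ext:
  "infection_path rec infm a b u s ss t w \<Longrightarrow> t \<le> t' \<Longrightarrow> rec w \<inter> {t<..t'} = {}
   \<Longrightarrow> infection_path rec infm a b u s ss t' w"
proof (induction ss arbitrary: u s)
  case Nil
  then have "{s<..t'} = {s<..t} \<union> {t<..t'}" by auto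
  with Nil show ?case by auto
next
  case (Cons s' ss)
  then show ?case by auto
qed

lemma ip_jump:
  "infection_path rec infm a b u s ss t w \<Longrightarrow> t < m \<Longrightarrow> m \<in> infm \<Longrightarrow> rec w \<inter> {t<..m} = {}
   \<Longrightarrow> infection_path rec infm a b u s (ss @ [m]) m (other a b w)"
proof (induction ss arbitrary: u s)
  case Nil
  then have "{s<..m} = {s<..t} \<union> {t<..m}" by auto
  with Nil show ?case by auto
next
  case (Cons s' ss)
  then show ?case by auto
qed

lemma Iinf_ext: "Iinf rec infm a b t w \<Longrightarrow> t \<le> t' \<Longrightarrow> rec w \<inter> {t<..t'} = {} \<Longrightarrow> Iinf rec infm a b t' w"
  unfolding Iinf_def using ip_ext by metis

lemma Iinf_jump: "Iinf rec infm a b t w \<Longrightarrow> t < m \<Longrightarrow> m \<in> infm \<Longrightarrow> rec w \<inter> {t<..m} = {}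
   \<Longrightarrow> Iinf rec infm a b m (other a b w)"
  unfolding Iinf_def using ip_jump by metis

lemma Iinf_0: "w \<in> {a,b} \<Longrightarrow> 0 \<le> t \<Longrightarrow> rec w \<inter> {0<..t} = {} \<Longrightarrow> Iinf rec infm a b t w"
  unfolding Iinf_def by (rule bexI[of _ w]) (auto intro!: exI[of _ "[]"])

lemma survival:
  fixes rec :: "'s \<Rightarrow> real set"
  assumes ab: "a \<noteq> b" and dpos: "\<delta> > 0" and t0: "0 \<le> t" and tK: "t \<le> K"
    and H1: "\<forall>s. 0 \<le> s \<and> s \<le> K \<longrightarrow> (\<exists>m\<in>infm. s < m \<and> m \<le> s + \<delta>)"
    and H2: "\<forall>w\<in>{a,b}. \<forall>r\<in>rec w. r \<le> K \<longrightarrow> \<delta> < r"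
    and H3: "\<forall>w\<in>{a,b}. \<forall>w'\<in>{a,b}. \<forall>r\<in>rec w. \<forall>r'\<in>rec w'. r \<le> K \<longrightarrow> r' \<le> K \<longrightarrow>
               (w \<noteq> w' \<or> r \<noteq> r') \<longrightarrow> 2*\<delta> \<le> \<bar>r - r'\<bar>"
    and H4: "\<forall>r\<in>rec b. \<not> (t - \<delta> < r \<and> r \<le> t)"
  shows "Iinf rec infm a b t b"
proof -
  have oth: "w \<in> {a,b} \<Longrightarrow> other a b w \<in> {a,b} \<and> other a b w \<noteq> w" for w
    using ab by (auto simp: other_def)
  define C1 where "C1 \<tau> = ((\<not>(\<exists>w\<in>{a,b}. \<exists>r\<in>rec w. \<tau> - \<delta> < r \<and> r \<le> \<tau>)) \<longrightarrow>
        Iinf rec infm a b \<tau> a \<and> Iinf rec infm a b \<tau> b)" for \<tau>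
  define C2 where "C2 \<tau> = (\<forall>w\<in>{a,b}. \<forall>r\<in>rec w. \<tau> - \<delta> < r \<and> r \<le> \<tau> \<longrightarrow> Iinf rec infm a b \<tau> (other a b w))" for \<tau>
  have ex: "C1 \<tau> \<Longrightarrow> C2 \<tau> \<Longrightarrow> \<exists>w\<in>{a,b}. Iinf rec infm a b \<tau> w" for \<tau>
    unfolding C1_def C2_def using oth by blast
  have main: "\<forall>\<tau>. 0 \<le> \<tau> \<and> \<tau> \<le> K \<and> \<tau> < real n * \<delta> \<longrightarrow> C1 \<tau> \<and> C2 \<tau>" for n
  proof (induction n)
    case 0
    then show ?case using dpos by auto
  next
    case (Suc n)
    have P1: "C1 \<tau>" if \<tau>: "0 \<le> \<tau>" "\<tau> \<le> K" "\<tau> < real (Suc n) * \<delta>" for \<tau>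
      unfolding C1_def
    proof
      assume nr: "\<not>(\<exists>w\<in>{a,b}. \<exists>r\<in>rec w. \<tau> - \<delta> < r \<and> r \<le> \<tau>)"
      show "Iinf rec infm a b \<tau> a \<and> Iinf rec infm a b \<tau> b"
      proof (cases "\<tau> \<le> \<delta>")
        case True
        have "rec w \<inter> {0<..\<tau>} = {}" if "w \<in> {a,b}" for w
        proof (rule ccontr)
          assume "rec w \<inter> {0<..\<tau>} \<noteq> {}"
          then obtain r where r: "r \<in> rec w \<inter> {0<..\<tau>}" by blast
          then have "r \<in> rec w" "0 < r" "r \<le> \<tau>" by auto
          moreover have "\<delta> < r" using H2 that calculation \<tau>(2) by auto
          ultimately show False using True by auto
        qed
        then have e: "rec a \<inter> {0<..\<tau>} = {}" "rec b \<inter> {0<..\<tau>} = {}" by auto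
        show ?thesis using Iinf_0[of a a b \<tau> rec, OF _ \<tau>(1) e(1)] Iinf_0[of b a b \<tau> rec, OF _ \<tau>(1) e(2)] by simp
      next
        case False
        define \<tau>' where "\<tau>' = \<tau> - \<delta>"
        have "0 \<le> \<tau>'" "\<tau>' \<le> K" "\<tau>' < real n * \<delta>" using False \<tau> unfolding \<tau>'_def
          using dpos by (auto simp: algebra_simps)
        with Suc.IH have "C1 \<tau>'" "C2 \<tau>'" by auto
        then obtain w where w: "w \<in> {a,b}" "Iinf rec infm a b \<tau>' w" using ex by blast
        obtain m where m: "m \<in> infm" "\<tau>' < m" "m \<le> \<tau>' + \<delta>" using H1 \<open>0 \<le> \<tau>'\<close> \<open>\<tau>' \<le> K\<close> by blast
        have free: "rec w' \<inter> {s<..s'} = {}" if "w' \<in> {a,b}" "\<tau>' \<le> s" "s' \<le> \<tau>" for w' s s'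
        proof (rule ccontr)
          assume "rec w' \<inter> {s<..s'} \<noteq> {}"
          then obtain r where "r \<in> rec w' \<inter> {s<..s'}" by blast
          then have "r \<in> rec w'" "s < r" "r \<le> s'" by auto
          then have "\<tau> - \<delta> < r \<and> r \<le> \<tau>" using that unfolding \<tau>'_def by auto
          then show False using nr that(1) \<open>r \<in> rec w'\<close> by blast
        qed
        have "Iinf rec infm a b \<tau> w" using Iinf_ext[OF w(2), of \<tau>] free[OF w(1)] \<tau>'_def dpos by auto
        moreover have "Iinf rec infm a b m (other a b w)"
          using Iinf_jump[OF w(2) m(2) m(1)] free[OF w(1), of \<tau>' m] m \<tau>'_def by auto
        then have "Iinf rec infm a b \<tau> (other a b w)"
          using Iinf_ext[of rec infm a b m "other a b w" \<tau>] free[OF oth[OF w(1), THEN conjunct1], of m \<tau>]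
            m \<tau>'_def by auto
        ultimately show ?thesis using w(1) oth[OF w(1)] by auto
      qed
    qed
    have P2: "C2 \<tau>" if \<tau>: "0 \<le> \<tau>" "\<tau> \<le> K" "\<tau> < real (Suc n) * \<delta>" for \<tau>
      unfolding C2_def
    proof (intro ballI impI)
      fix w r assume w: "w \<in> {a,b}" and r: "r \<in> rec w" and rt: "\<tau> - \<delta> < r \<and> r \<le> \<tau>"
      have rK: "r \<le> K" using rt \<tau> by auto
      have rd: "\<delta> < r" using H2 w r rK by auto
      define \<tau>' where "\<tau>' = r - \<delta>"
      have t': "0 \<le> \<tau>'" "\<tau>' \<le> K" "\<tau>' < real n * \<delta>" using rd rt \<tau> rK unfolding \<tau>'_def
        by (auto simp: algebra_simps)
      have nr: "\<not>(\<exists>w\<in>{a,b}. \<exists>r\<in>rec w. \<tau>' - \<delta> < r \<and> r \<le> \<tau>')"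
      proof
        assume "\<exists>w'\<in>{a,b}. \<exists>r'\<in>rec w'. \<tau>' - \<delta> < r' \<and> r' \<le> \<tau>'"
        then obtain w' r' where "w' \<in> {a,b}" "r' \<in> rec w'" "\<tau>' - \<delta> < r'" "r' \<le> \<tau>'" by blast
        moreover have "r' \<le> K" using calculation t' by auto
        moreover have "r' \<noteq> r" using calculation(4) dpos unfolding \<tau>'_def by auto
        ultimately have "2*\<delta> \<le> \<bar>r - r'\<bar>" using H3 w r rK by blast
        then show False using \<open>\<tau>' - \<delta> < r'\<close> \<open>r' \<le> \<tau>'\<close> unfolding \<tau>'_def by auto
      qed
      from Suc.IH t' have "C1 \<tau>'" by auto
      with nr have "Iinf rec infm a b \<tau>' a \<and> Iinf rec infm a b \<tau>' b" unfolding C1_def by blast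
      then have I': "Iinf rec infm a b \<tau>' (other a b w)" unfolding other_def by simp
      have "rec (other a b w) \<inter> {\<tau>'<..\<tau>} = {}"
      proof (rule ccontr)
        assume "rec (other a b w) \<inter> {\<tau>'<..\<tau>} \<noteq> {}"
        then obtain r' where "r' \<in> rec (other a b w) \<inter> {\<tau>'<..\<tau>}" by blast
        then have r': "r' \<in> rec (other a b w)" "\<tau>' < r'" "r' \<le> \<tau>" by auto
        have "r' \<le> K" using r' \<tau> by auto
        then have "2*\<delta> \<le> \<bar>r - r'\<bar>" using H3 w r r' oth[OF w] rK by blast
        then show False using r' rt unfolding \<tau>'_def by auto
      qed
      then show "Iinf rec infm a b \<tau> (other a b w)" using Iinf_ext[OF I'] rt unfolding \<tau>'_def by auto
    qed
    show ?case using P1 P2 by blast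
  qed
  obtain n :: nat where n: "t < real n * \<delta>"
    using reals_Archimedean3[OF dpos] by blast
  have "C1 t" "C2 t" using main[of n] n t0 tK by auto
  show ?thesis
  proof (cases "\<exists>w\<in>{a,b}. \<exists>r\<in>rec w. t - \<delta> < r \<and> r \<le> t")
    case True
    then obtain w r where "w \<in> {a,b}" "r \<in> rec w" "t - \<delta> < r \<and> r \<le> t" by blast
    moreover then have "w = a" using H4 by auto
    ultimately have "Iinf rec infm a b t (other a b a)" using \<open>C2 t\<close> unfolding C2_def by blast
    then show ?thesis by (simp add: other_def)
  next
    case False
    then show ?thesis using \<open>C1 t\<close> unfolding C1_def by blast
  qed
qed


abbreviation M0 :: "(idx \<Rightarrow> real) measure" where
  "M0 \<equiv> PiM UNIV (\<lambda>_. (borel :: real measure))"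

lemma sets_model: "sets (model p v lam) = sets M0"
  unfolding model_def by (intro sets_PiM_cong) auto

lemma ip_set: "infection_path rec infm a b u s ss t w \<Longrightarrow> set ss \<subseteq> infm"
  by (induction ss arbitrary: u s) auto

lemma ppp_range: "ppp E = range (\<lambda>n. \<Sum>k\<le>n. E k)"
  unfolding ppp_def by auto

lemma ex_ip_nat:
  "(\<exists>ss. infection_path rec (range S) a b u s ss t w) \<longleftrightarrow>
   (\<exists>ns::nat list. infection_path rec (range S) a b u s (map S ns) t w)"
proof
  assume "\<exists>ss. infection_path rec (range S) a b u s ss t w"
  then obtain ss where ss: "infection_path rec (range S) a b u s ss t w" by blast
  then have "set ss \<subseteq> range S" by (rule ip_set)
  then have "\<exists>ns. ss = map S ns" by (auto simp: ex_map_conv)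
  then show "\<exists>ns. infection_path rec (range S) a b u s (map S ns) t w" using ss by auto
qed auto

lemma pred_ip:
  fixes R :: "'a \<Rightarrow> 's \<Rightarrow> real set" and S :: "'a \<Rightarrow> nat \<Rightarrow> real" and M0 :: "'a measure"
  assumes avoid: "\<And>u f g. f \<in> borel_measurable M0 \<Longrightarrow> g \<in> borel_measurable M0 \<Longrightarrow>
      Measurable.pred M0 (\<lambda>\<omega>. R \<omega> u \<inter> {f \<omega><..g \<omega>} = {})"
    and Sm: "\<And>n. (\<lambda>\<omega>. S \<omega> n) \<in> borel_measurable M0"
    and tm: "t \<in> borel_measurable M0"
  shows "s \<in> borel_measurable M0 \<Longrightarrow>
    Measurable.pred M0 (\<lambda>\<omega>. infection_path (R \<omega>) (range (S \<omega>)) a b u (s \<omega>) (map (S \<omega>) ns) (t \<omega>) w)"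
proof (induction ns arbitrary: u s)
  case Nil
  note [measurable] = Nil tm
  have "Measurable.pred M0 (\<lambda>\<omega>. s \<omega> \<le> t \<omega>)" by measurable
  moreover have "Measurable.pred M0 (\<lambda>\<omega>. R \<omega> u \<inter> {s \<omega><..t \<omega>} = {})" using avoid Nil tm by blast
  ultimately show ?case by (cases "u = w") auto
next
  case (Cons n ns)
  note [measurable] = Cons.prems Sm
  have a: "Measurable.pred M0 (\<lambda>\<omega>. s \<omega> < S \<omega> n)" by measurable
  have b: "Measurable.pred M0 (\<lambda>\<omega>. R \<omega> u \<inter> {s \<omega><..S \<omega> n} = {})" using avoid Cons.prems Sm by blast
  have c: "Measurable.pred M0 (\<lambda>\<omega>. infection_path (R \<omega>) (range (S \<omega>)) a b (other a b u) (S \<omega> n) (map (S \<omega>) ns) (t \<omega>) w)"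
    using Cons.IH Sm by blast
  have "Measurable.pred M0 (\<lambda>\<omega>. s \<omega> < S \<omega> n \<and> R \<omega> u \<inter> {s \<omega><..S \<omega> n} = {} \<and>
     infection_path (R \<omega>) (range (S \<omega>)) a b (other a b u) (S \<omega> n) (map (S \<omega>) ns) (t \<omega>) w)"
    using a b c by (intro pred_intros_logic) auto
  then show ?case by simp
qed

lemma avoid_shift:
  fixes c :: "'a \<Rightarrow> real" and P :: "'a \<Rightarrow> nat \<Rightarrow> real" and M0 :: "'a measure"
  assumes "c \<in> borel_measurable M0" "\<And>n. (\<lambda>\<omega>. P \<omega> n) \<in> borel_measurable M0"
    "f \<in> borel_measurable M0" "g \<in> borel_measurable M0"
  shows "Measurable.pred M0 (\<lambda>\<omega>. ({c \<omega>} \<union> (\<lambda>s. c \<omega> + s) ` range (P \<omega>)) \<inter> {f \<omega><..g \<omega>} = {})"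
proof -
  have eq: "(({c \<omega>} \<union> (\<lambda>s. c \<omega> + s) ` range (P \<omega>)) \<inter> {f \<omega><..g \<omega>} = {}) \<longleftrightarrow>
    (\<not> (f \<omega> < c \<omega> \<and> c \<omega> \<le> g \<omega>) \<and> (\<forall>n. \<not> (f \<omega> < c \<omega> + P \<omega> n \<and> c \<omega> + P \<omega> n \<le> g \<omega>)))" for \<omega>
    by (auto simp: disjoint_iff image_iff)
  note [measurable] = assms
  show ?thesis unfolding eq by measurable
qed


lemma ind_meas[measurable]: "Measurable.pred M P \<Longrightarrow> (\<lambda>\<omega>. ind (P \<omega>)) \<in> borel_measurable M"
  unfolding ind_def by measurable

lemma coord_meas: "(\<lambda>\<omega>. \<omega> i) \<in> borel_measurable M0"
  by (rule measurable_component_singleton) simp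

lemma psum_meas: "(\<lambda>\<omega>. \<Sum>k\<le>n. \<omega> (f k)) \<in> borel_measurable M0"
  by (intro borel_measurable_sum coord_meas)

lemma chi_s_range: "chi_s \<omega> x = range (\<lambda>n. \<Sum>k\<le>n. \<omega> (Cs x k))"
  unfolding chi_s_def ppp_range ..

lemma chi_e_range: "chi_e \<omega> e = range (\<lambda>n. \<Sum>k\<le>n. \<omega> (Ce e k))"
  unfolding chi_e_def ppp_range ..

lemma meas_eta:
  assumes tm: "t \<in> borel_measurable M0"
  shows "Measurable.pred M0 (\<lambda>\<omega>. y \<in> eta \<omega> x y (t \<omega>))"
proof -
  define cx where "cx \<omega> = \<omega> (Xs x) - \<omega> (Xo (x, y))" for \<omega> :: "idx \<Rightarrow> real"
  define R where "R \<omega> u = (if u = x then {cx \<omega>} \<union> (\<lambda>s. cx \<omega> + s) ` range (\<lambda>n. \<Sum>k\<le>n. \<omega> (Cs x k))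
                 else {\<omega> (Xs y)} \<union> (\<lambda>s. \<omega> (Xs y) + s) ` range (\<lambda>n. \<Sum>k\<le>n. \<omega> (Cs y k)))" for \<omega> u
  define S where "S \<omega> n = (\<Sum>k\<le>n. \<omega> (Ce {x,y} k))" for \<omega> :: "idx \<Rightarrow> real" and n
  have cxm: "cx \<in> borel_measurable M0" unfolding cx_def by (intro borel_measurable_diff coord_meas)
  have Sm: "(\<lambda>\<omega>. S \<omega> n) \<in> borel_measurable M0" for n unfolding S_def by (rule psum_meas)
  have avoid: "Measurable.pred M0 (\<lambda>\<omega>. R \<omega> u \<inter> {f \<omega><..g \<omega>} = {})"
    if "f \<in> borel_measurable M0" "g \<in> borel_measurable M0" for u f g
  proof (cases "u = x")
    case True
    then show ?thesis unfolding R_def using avoid_shift[OF cxm psum_meas that] by simp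
  next
    case False
    then show ?thesis unfolding R_def using avoid_shift[OF coord_meas psum_meas that] by simp
  qed
  have eq: "(y \<in> eta \<omega> x y (t \<omega>)) \<longleftrightarrow> (\<omega> (Xo (x, y)) < \<omega> (Xs x) \<and>
     (\<exists>u\<in>{x,y}. \<exists>ns::nat list. infection_path (R \<omega>) (range (S \<omega>)) x y u ((\<lambda>_. 0) \<omega>) (map (S \<omega>) ns) (t \<omega>) y))" for \<omega>
  proof -
    have "eta \<omega> x y (t \<omega>) = (if \<omega> (Xo (x, y)) < \<omega> (Xs x) then cp2 (R \<omega>) (range (S \<omega>)) x y (t \<omega>) else {})"
      unfolding eta_def R_def cx_def S_def chi_s_range chi_e_range by simp
    then show ?thesis unfolding cp2_def using ex_ip_nat[of "R \<omega>" "S \<omega>" x y _ 0 "t \<omega>" y] by auto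
  qed
  have p1: "Measurable.pred M0 (\<lambda>\<omega>. \<omega> (Xo (x, y)) < \<omega> (Xs x))"
    unfolding pred_def by (intro borel_measurable_less coord_meas)
  have p2: "Measurable.pred M0 (\<lambda>\<omega>. infection_path (R \<omega>) (range (S \<omega>)) x y u ((\<lambda>_. 0) \<omega>) (map (S \<omega>) ns) (t \<omega>) y)"
    for u ns
    by (rule pred_ip[OF avoid Sm tm]) simp_all
  have p3: "Measurable.pred M0 (\<lambda>\<omega>. \<exists>u\<in>{x,y}. \<exists>ns::nat list. infection_path (R \<omega>) (range (S \<omega>)) x y u ((\<lambda>_. 0) \<omega>) (map (S \<omega>) ns) (t \<omega>) y)"
    using p2 by (intro pred_intros_finite pred_intros_countable) auto
  show ?thesis unfolding eq using p1 p3 by (intro pred_intros_logic)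
qed

lemma zeta_meas: "(\<lambda>\<omega>. zeta \<omega> x y z) \<in> borel_measurable M0"
proof -
  have e[measurable]: "Measurable.pred M0 (\<lambda>\<omega>. y \<in> eta \<omega> x y (\<omega> (Tp {y, z})))"
    by (rule meas_eta[OF coord_meas])
  have c[measurable]: "(\<lambda>\<omega>. \<omega> i) \<in> borel_measurable M0" for i by (rule coord_meas)
  show ?thesis unfolding zeta_def Let_def by measurable
qed

lemma zeta_under_meas: "(\<lambda>\<omega>. zeta_under d \<omega> y z) \<in> borel_measurable M0"
  unfolding zeta_under_def by (intro borel_measurable_prod zeta_meas)

lemma target_sets: "{\<omega> \<in> space (model p v lam). zeta_under d \<omega> y z = 1} \<in> sets (model p v lam)"
proof -
  have "{\<omega> \<in> space M0. zeta_under d \<omega> y z = 1} \<in> sets M0"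
    using zeta_under_meas unfolding pred_def by (intro borel_measurable_eq) (auto intro: borel_measurable_const)
  moreover have "space (model p v lam) = space M0" using sets_model by (rule sets_eq_imp_space_eq)
  ultimately show ?thesis using sets_model by metis
qed


definition rho :: "real \<Rightarrow> (nat \<Rightarrow> real) \<Rightarrow> nat \<Rightarrow> real" where
  "rho c C n = c + (\<Sum>k<n. C k)"

lemma rec_range: "{c} \<union> (\<lambda>s. c + s) ` range (\<lambda>n. \<Sum>k\<le>n. C k) = range (rho c C)"
proof (intro equalityI subsetI)
  fix r assume "r \<in> {c} \<union> (\<lambda>s. c + s) ` range (\<lambda>n. \<Sum>k\<le>n. C k)"
  then show "r \<in> range (rho c C)"
  proof
    assume "r \<in> {c}" then show ?thesis by (auto simp: rho_def intro!: image_eqI[of _ _ 0])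
  next
    assume "r \<in> (\<lambda>s. c + s) ` range (\<lambda>n. \<Sum>k\<le>n. C k)"
    then obtain n where "r = c + (\<Sum>k\<le>n. C k)" by auto
    then show ?thesis by (auto simp: rho_def lessThan_Suc_atMost[symmetric] intro!: image_eqI[of _ _ "Suc n"])
  qed
next
  fix r assume "r \<in> range (rho c C)"
  then obtain n where n: "r = rho c C n" by auto
  show "r \<in> {c} \<union> (\<lambda>s. c + s) ` range (\<lambda>n. \<Sum>k\<le>n. C k)"
  proof (cases n)
    case 0 then show ?thesis using n by (simp add: rho_def)
  next
    case (Suc m) then show ?thesis using n by (auto simp: rho_def lessThan_Suc_atMost)
  qed
qed

lemma rho_mono:
  assumes "\<forall>k. 0 \<le> C k" "n \<le> m" shows "rho c C n \<le> rho c C m"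
  unfolding rho_def using assms by (auto intro!: sum_mono2)

lemma rho_ge: "\<forall>k. 0 \<le> C k \<Longrightarrow> c \<le> rho c C n"
  using rho_mono[of C 0 n c] by (simp add: rho_def)

lemma rho_gap:
  assumes "\<forall>k. 0 \<le> C k" "n < m"
  shows "rho c C m - rho c C n \<ge> C n"
proof -
  have "rho c C (Suc n) \<le> rho c C m" using rho_mono assms by (simp add: Suc_le_eq)
  moreover have "rho c C (Suc n) = rho c C n + C n" by (simp add: rho_def)
  ultimately show ?thesis by simp
qed

lemma rho_big:
  assumes "\<forall>k. 0 \<le> C k" "0 \<le> c" "K < (\<Sum>k\<le>Nr. C k)" "Suc Nr \<le> n"
  shows "K < rho c C n"
proof -
  have "rho c C (Suc Nr) \<le> rho c C n" using rho_mono assms by blast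
  moreover have "rho c C (Suc Nr) = c + (\<Sum>k\<le>Nr. C k)" by (simp add: rho_def lessThan_Suc_atMost)
  ultimately show ?thesis using assms by simp
qed

lemma dense_marks:
  fixes E :: "nat \<Rightarrow> real"
  assumes E: "\<forall>k\<le>Ni. 0 \<le> E k \<and> E k \<le> \<delta>" and big: "K < (\<Sum>k\<le>Ni. E k)"
    and s: "0 \<le> s" "s \<le> K"
  shows "\<exists>m\<in>range (\<lambda>n. \<Sum>k\<le>n. E k). s < m \<and> m \<le> s + \<delta>"
proof -
  define P where "P n = (\<Sum>k\<le>n. E k)" for n
  have ex: "\<exists>n. s < P n" using big s unfolding P_def by (intro exI[of _ Ni]) auto
  define n0 where "n0 = (LEAST n. s < P n)"
  have n0: "s < P n0" unfolding n0_def using LeastI_ex[OF ex] .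
  have n0le: "n0 \<le> Ni" unfolding n0_def using big s by (intro Least_le) (auto simp: P_def)
  show ?thesis
  proof (cases n0)
    case 0
    then have "P n0 \<le> s + \<delta>" using E[rule_format, of 0] s by (simp add: P_def)
    then show ?thesis using n0 unfolding P_def by auto
  next
    case (Suc n')
    then have "\<not> s < P n'" unfolding n0_def using not_less_Least[of n' "\<lambda>n. s < P n"] n0_def by auto
    moreover have "P n0 = P n' + E n0" using Suc by (simp add: P_def)
    ultimately have "P n0 \<le> s + \<delta>" using E n0le by force
    then show ?thesis using n0 unfolding P_def by auto
  qed
qed

lemma surv_concrete:
  fixes \<omega> :: "idx \<Rightarrow> real" and x y :: site
  assumes xy: "x \<noteq> y" and dpos: "0 < \<delta>" and dh: "\<delta> \<le> h" and t0: "0 \<le> t" and tK: "t \<le> K"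
    and cx: "2*h < \<omega> (Xs x)" "\<omega> (Xo (x,y)) \<le> \<delta>"
    and cy: "h < \<omega> (Xs y)"
    and nn: "\<forall>k. 0 \<le> \<omega> (Cs x k)" "\<forall>k. 0 \<le> \<omega> (Cs y k)"
    and gx: "\<forall>k\<le>Nr. 2*\<delta> < \<omega> (Cs x k)" "K < (\<Sum>k\<le>Nr. \<omega> (Cs x k))"
    and gy: "\<forall>k\<le>Nr. 2*\<delta> < \<omega> (Cs y k)" "K < (\<Sum>k\<le>Nr. \<omega> (Cs y k))"
    and cross: "\<forall>n\<le>Suc Nr. \<forall>m\<le>Suc Nr. 2*\<delta> \<le> \<bar>rho (\<omega> (Xs x) - \<omega> (Xo (x,y))) (\<lambda>k. \<omega> (Cs x k)) n
                       - rho (\<omega> (Xs y)) (\<lambda>k. \<omega> (Cs y k)) m\<bar>"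
    and endc: "\<forall>m\<le>Suc Nr. \<delta> \<le> \<bar>rho (\<omega> (Xs y)) (\<lambda>k. \<omega> (Cs y k)) m - t\<bar>"
    and inf: "\<forall>k\<le>Ni. 0 \<le> \<omega> (Ce {x,y} k) \<and> \<omega> (Ce {x,y} k) \<le> \<delta>" "K < (\<Sum>k\<le>Ni. \<omega> (Ce {x,y} k))"
  shows "y \<in> eta \<omega> x y t"
proof -
  define c where "c u = (if u = x then \<omega> (Xs x) - \<omega> (Xo (x,y)) else \<omega> (Xs y))" for u
  define C where "C u = (\<lambda>k. \<omega> (Cs (if u = x then x else y) k))" for u
  define rec where "rec u = range (rho (c u) (C u))" for u
  have cxpos: "\<delta> < c x" using cx dh by (simp add: c_def)
  have cypos: "\<delta> < c y" using cy dh xy by (simp add: c_def)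
  have cpos: "\<delta> < c u" if "u \<in> {x,y}" for u using that cxpos cypos by auto
  have nnu: "\<forall>k. 0 \<le> C u k" if "u \<in> {x,y}" for u using that nn by (auto simp: C_def)
  have gu: "\<forall>k\<le>Nr. 2*\<delta> < C u k" "K < (\<Sum>k\<le>Nr. C u k)" if "u \<in> {x,y}" for u
    using that gx gy by (auto simp: C_def)
  have idx: "n \<le> Suc Nr" if "u \<in> {x,y}" "rho (c u) (C u) n \<le> K" for u n
  proof (rule ccontr)
    assume "\<not> n \<le> Suc Nr"
    then have "K < rho (c u) (C u) n" using rho_big[OF nnu[OF that(1)] _ gu(2)[OF that(1)]] cpos[OF that(1)] dpos by auto
    then show False using that by simp
  qed
  have eta_eq: "eta \<omega> x y t = cp2 rec (range (\<lambda>n. \<Sum>k\<le>n. \<omega> (Ce {x,y} k))) x y t"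
  proof -
    have "\<omega> (Xo (x, y)) < \<omega> (Xs x)" using cx dh dpos by auto
    moreover have "(\<lambda>u. if u = x then {\<omega> (Xs x) - \<omega> (Xo (x, y))} \<union> (\<lambda>s. \<omega> (Xs x) - \<omega> (Xo (x, y)) + s) ` chi_s \<omega> x
                 else {\<omega> (Xs y)} \<union> (\<lambda>s. \<omega> (Xs y) + s) ` chi_s \<omega> y) = rec"
      unfolding chi_s_range rec_range by (rule ext) (simp add: rec_def c_def C_def)
    ultimately show ?thesis unfolding eta_def chi_e_range by simp
  qed
  have "Iinf rec (range (\<lambda>n. \<Sum>k\<le>n. \<omega> (Ce {x,y} k))) x y t y"
  proof (rule survival[OF xy dpos t0 tK])
    show "\<forall>s. 0 \<le> s \<and> s \<le> K \<longrightarrow> (\<exists>m\<in>range (\<lambda>n. \<Sum>k\<le>n. \<omega> (Ce {x, y} k)). s < m \<and> m \<le> s + \<delta>)"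
      using dense_marks[OF inf] by blast
    show "\<forall>w\<in>{x, y}. \<forall>r\<in>rec w. r \<le> K \<longrightarrow> \<delta> < r"
    proof (intro ballI impI)
      fix w r assume w: "w \<in> {x,y}" and r: "r \<in> rec w" and "r \<le> K"
      obtain n where n: "r = rho (c w) (C w) n" using r unfolding rec_def by auto
      have "c w \<le> r" using rho_ge[OF nnu[OF w]] n by simp
      then show "\<delta> < r" using cpos[OF w] by simp
    qed
    show "\<forall>w\<in>{x, y}. \<forall>w'\<in>{x, y}. \<forall>r\<in>rec w. \<forall>r'\<in>rec w'. r \<le> K \<longrightarrow> r' \<le> K \<longrightarrow>
          (w \<noteq> w' \<or> r \<noteq> r') \<longrightarrow> 2 * \<delta> \<le> \<bar>r - r'\<bar>"
    proof (intro ballI impI)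
      fix w w' r r' assume w: "w \<in> {x,y}" and w': "w' \<in> {x,y}" and r: "r \<in> rec w" and r': "r' \<in> rec w'"
        and rK: "r \<le> K" and r'K: "r' \<le> K" and ne: "w \<noteq> w' \<or> r \<noteq> r'"
      obtain n where n: "r = rho (c w) (C w) n" using r unfolding rec_def by auto
      obtain m where m: "r' = rho (c w') (C w') m" using r' unfolding rec_def by auto
      have nle: "n \<le> Suc Nr" using idx[OF w] n rK by simp
      have mle: "m \<le> Suc Nr" using idx[OF w'] m r'K by simp
      show "2 * \<delta> \<le> \<bar>r - r'\<bar>"
      proof (cases "w = w'")
        case False
        then have "(w = x \<and> w' = y) \<or> (w = y \<and> w' = x)" using w w' by auto
        then show ?thesis
        proof
          assume "w = x \<and> w' = y"
          then show ?thesis using cross nle mle n m xy by (simp add: c_def C_def)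
        next
          assume "w = y \<and> w' = x"
          then have "2*\<delta> \<le> \<bar>r' - r\<bar>" using cross nle mle n m xy by (simp add: c_def C_def)
          then show ?thesis by (simp add: abs_minus_commute)
        qed
      next
        case True
        with ne have "r \<noteq> r'" by simp
        then have "n \<noteq> m" using n m True by auto
        then have "n < m \<or> m < n" by auto
        then show ?thesis
        proof
          assume nm: "n < m"
          have "C w n \<le> rho (c w) (C w) m - rho (c w) (C w) n" using rho_gap[OF nnu[OF w] nm] .
          moreover have "2*\<delta> < C w n" using gu(1)[OF w] nm mle by auto
          ultimately show ?thesis using n m True by simp
        next
          assume nm: "m < n"
          have "C w m \<le> rho (c w) (C w) n - rho (c w) (C w) m" using rho_gap[OF nnu[OF w] nm] .
          moreover have "2*\<delta> < C w m" using gu(1)[OF w] nm nle by auto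
          ultimately show ?thesis using n m True by simp
        qed
      qed
    qed
    show "\<forall>r\<in>rec y. \<not> (t - \<delta> < r \<and> r \<le> t)"
    proof (intro ballI notI)
      fix r assume r: "r \<in> rec y" and rt: "t - \<delta> < r \<and> r \<le> t"
      obtain m where m: "r = rho (c y) (C y) m" using r unfolding rec_def by auto
      have "m \<le> Suc Nr" using idx[of y m] m rt tK by simp
      then have "\<delta> \<le> \<bar>r - t\<bar>" using endc m xy by (simp add: c_def C_def)
      then show False using rt by auto
    qed
  qed
  then show ?thesis unfolding eta_eq cp2_def Iinf_def by simp
qed


abbreviation Mi :: "(idx \<Rightarrow> real) \<Rightarrow> idx \<Rightarrow> real measure" where
  "Mi rt i \<equiv> density lborel (exponential_density (rt i))"

locale expmodel =
  fixes rt :: "idx \<Rightarrow> real"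
  assumes rt_pos: "\<And>i. 0 < rt i"
begin

abbreviation MM where "MM \<equiv> PiM UNIV (Mi rt)"

lemma prob_Mi: "prob_space (Mi rt i)"
  by (rule prob_space_exponential_density[OF rt_pos])

sublocale pps: product_prob_space "Mi rt" UNIV
  by (simp add: product_prob_space_def product_sigma_finite_def prob_Mi prob_space_imp_sigma_finite
      product_prob_space_axioms_def)

lemma sets_MM: "sets MM = sets M0"
  by (intro sets_PiM_cong) auto

lemma space_MM: "space MM = UNIV"
  by (simp add: space_PiM)

lemma meas_MM: "f \<in> borel_measurable M0 \<Longrightarrow> f \<in> borel_measurable MM"
  using measurable_cong_sets[OF sets_MM refl] by blast

lemma sets_MM_I: "{\<omega>. P \<omega>} \<in> sets M0 \<Longrightarrow> {\<omega>. P \<omega>} \<in> sets MM"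
  using sets_MM by simp

lemma emeq: "emeasure (Mi rt i) A = ennreal (measure (Mi rt i) A)"
  by (rule pps.M.emeasure_eq_measure)

lemma Mi_diff: "A \<in> sets borel \<Longrightarrow> B \<in> sets borel \<Longrightarrow> B \<subseteq> A \<Longrightarrow>
   measure (Mi rt i) (A - B) = measure (Mi rt i) A - measure (Mi rt i) B"
  by (simp add: pps.M.finite_measure_Diff)

lemma Mi_compl: "A \<in> sets borel \<Longrightarrow> measure (Mi rt i) (UNIV - A) = 1 - measure (Mi rt i) A"
  using pps.M.prob_compl[of A i] by simp

lemma prob_coords:
  assumes "finite J" "\<And>i. i \<in> J \<Longrightarrow> A i \<in> sets borel"
  shows "pps.prob {\<omega>. \<forall>i\<in>J. \<omega> i \<in> A i} = (\<Prod>i\<in>J. measure (Mi rt i) (A i))"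
proof -
  have "emeasure MM {\<omega>\<in>space MM. \<forall>i\<in>J. \<omega> i \<in> A i} = (\<Prod>i\<in>J. emeasure (Mi rt i) (A i))"
    using assms by (intro pps.emeasure_PiM_Collect) auto
  then have "ennreal (pps.prob {\<omega>. \<forall>i\<in>J. \<omega> i \<in> A i}) = (\<Prod>i\<in>J. ennreal (measure (Mi rt i) (A i)))"
    by (simp add: space_MM pps.emeasure_eq_measure emeq)
  then show ?thesis
    by (simp add: prod_ennreal measure_nonneg prod_nonneg)
qed

lemma prob_coord:
  assumes "A \<in> sets borel"
  shows "pps.prob {\<omega>. \<omega> i \<in> A} = measure (Mi rt i) A"
  using prob_coords[of "{i}" "\<lambda>_. A"] assms by simp

lemma measure_le: "0 \<le> a \<Longrightarrow> measure (Mi rt i) {..a} = 1 - exp (- rt i * a)"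
proof -
  assume a: "0 \<le> a"
  have "emeasure (Mi rt i) {..a} = ennreal (erlang_CDF 0 (rt i) a)"
    by (rule emeasure_erlang_density[OF rt_pos])
  moreover have "0 \<le> 1 - exp (- rt i * a)" using a rt_pos[of i] by simp
  ultimately show ?thesis using a
    by (simp add: emeq erlang_CDF_0)
qed

lemma measure_le_neg: "a \<le> 0 \<Longrightarrow> measure (Mi rt i) {..a} = 0"
proof -
  assume a: "a \<le> 0"
  have "emeasure (Mi rt i) {..a} = ennreal (erlang_CDF 0 (rt i) a)"
    by (rule emeasure_erlang_density[OF rt_pos])
  then show ?thesis using a
    by (cases "a = 0") (auto simp add: emeq erlang_CDF_0 measure_nonneg)
qed

lemma measure_gt: "0 \<le> a \<Longrightarrow> measure (Mi rt i) {a<..} = exp (- rt i * a)"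
proof -
  assume a: "0 \<le> a"
  have "{a<..} = UNIV - {..a}" by auto
  then have "measure (Mi rt i) {a<..} = 1 - measure (Mi rt i) {..a}"
    using Mi_compl[of "{..a}"] by simp
  then show ?thesis using measure_le[OF a] by simp
qed

lemma measure_Ioc: "0 \<le> a \<Longrightarrow> a \<le> b \<Longrightarrow> measure (Mi rt i) {a<..b} = exp (- rt i * a) - exp (- rt i * b)"
proof -
  assume a: "0 \<le> a" "a \<le> b"
  have "{a<..b} = {..b} - {..a}" by auto
  then have "measure (Mi rt i) {a<..b} = measure (Mi rt i) {..b} - measure (Mi rt i) {..a}"
    using a by (simp add: Mi_diff)
  then show ?thesis using measure_le a by simp
qed

end


context expmodel
begin

lemma coord_MM: "(\<lambda>\<omega>. \<omega> i) \<in> borel_measurable MM"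
  by (rule meas_MM[OF coord_meas])

lemma prob_coords_f:
  assumes J: "finite J" "inj_on f J" and B: "\<And>j. j \<in> J \<Longrightarrow> B j \<in> sets borel"
  shows "pps.prob {\<omega>. \<forall>j\<in>J. \<omega> (f j) \<in> B j} = (\<Prod>j\<in>J. measure (Mi rt (f j)) (B j))"
proof -
  define B' where "B' i = B (the_inv_into J f i)" for i
  have "{\<omega>. \<forall>j\<in>J. \<omega> (f j) \<in> B j} = {\<omega>. \<forall>i\<in>f`J. \<omega> i \<in> B' i}"
    using J by (auto simp: B'_def the_inv_into_f_f)
  moreover have "pps.prob {\<omega>. \<forall>i\<in>f`J. \<omega> i \<in> B' i} = (\<Prod>i\<in>f`J. measure (Mi rt i) (B' i))"
    using J B by (intro prob_coords) (auto simp: B'_def the_inv_into_f_f)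
  moreover have "(\<Prod>i\<in>f`J. measure (Mi rt i) (B' i)) = (\<Prod>j\<in>J. measure (Mi rt (f j)) (B j))"
    using J by (simp add: prod.reindex B'_def the_inv_into_f_f)
  ultimately show ?thesis by simp
qed

lemma indep_coords:
  assumes inj: "inj_on f I"
  shows "pps.indep_vars (\<lambda>_. borel) (\<lambda>k \<omega>. \<omega> (f k)) I"
  unfolding pps.indep_vars_def2
proof (intro conjI ballI pps.indep_setsI)
  fix i assume "i \<in> I"
  show "(\<lambda>\<omega>. \<omega> (f i)) \<in> borel_measurable MM" by (rule coord_MM)
next
  fix i assume "i \<in> I"
  show "{(\<lambda>\<omega>. \<omega> (f i)) -` A \<inter> space MM |A. A \<in> sets borel} \<subseteq> pps.events"
    using measurable_sets[OF coord_MM[of "f i"]] by blast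
next
  fix A J assume J: "J \<noteq> {}" "J \<subseteq> I" "finite J"
    and A: "\<forall>j\<in>J. A j \<in> {(\<lambda>\<omega>. \<omega> (f j)) -` A \<inter> space MM |A. A \<in> sets borel}"
  have "\<forall>j\<in>J. \<exists>Bj. A j = (\<lambda>\<omega>. \<omega> (f j)) -` Bj \<inter> space MM \<and> Bj \<in> sets borel"
    using A by blast
  then obtain B where B0: "\<forall>j\<in>J. A j = (\<lambda>\<omega>. \<omega> (f j)) -` B j \<inter> space MM \<and> B j \<in> sets borel"
    by (rule bchoice[THEN exE]) blast
  then have B: "\<And>j. j \<in> J \<Longrightarrow> A j = (\<lambda>\<omega>. \<omega> (f j)) -` B j \<inter> space MM \<and> B j \<in> sets borel"
    by blast
  have injJ: "inj_on f J" using inj_on_subset[OF inj J(2)] .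
  have "(\<Inter>j\<in>J. A j) = {\<omega>. \<forall>j\<in>J. \<omega> (f j) \<in> B j}" using B J by (auto simp: space_MM)
  then have "pps.prob (\<Inter>j\<in>J. A j) = (\<Prod>j\<in>J. measure (Mi rt (f j)) (B j))"
    using prob_coords_f[OF J(3) injJ, of B] B by simp
  also have "\<dots> = (\<Prod>j\<in>J. pps.prob (A j))"
  proof (rule prod.cong[OF refl])
    fix j assume "j \<in> J"
    then have "A j = {\<omega>. \<omega> (f j) \<in> B j}" using B by (auto simp: space_MM)
    then show "measure (Mi rt (f j)) (B j) = pps.prob (A j)" using prob_coord B \<open>j \<in> J\<close> by simp
  qed
  finally show "pps.prob (\<Inter>j\<in>J. A j) = (\<Prod>j\<in>J. pps.prob (A j))" .
qed

lemma distributed_coord: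
  "distributed MM lborel (\<lambda>\<omega>. \<omega> i) (exponential_density (rt i))"
proof (rule erlang_distributedI[OF coord_MM rt_pos])
  fix a :: real assume a: "0 \<le> a"
  have "emeasure MM {x \<in> space MM. x i \<le> a} = ennreal (pps.prob {x. x i \<in> {..a}})"
    by (simp add: pps.emeasure_eq_measure space_MM)
  also have "\<dots> = ennreal (1 - exp (- rt i * a))" using prob_coord[of "{..a}" i] measure_le[OF a] by simp
  also have "\<dots> = ennreal (erlang_CDF 0 (rt i) a)" using a by (simp add: erlang_CDF_0)
  finally show "emeasure MM {x \<in> space MM. x i \<le> a} = ennreal (erlang_CDF 0 (rt i) a)" .
qed

lemma erlang_sum:
  assumes inj: "inj f" and rl: "\<And>k. rt (f k) = l" and K: "0 \<le> K"
  shows "pps.prob {\<omega>. (\<Sum>k\<le>n. \<omega> (f k)) \<le> K} = erlang_CDF n l K"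
proof -
  have l: "0 < l" using rt_pos rl by metis
  have "distributed MM lborel (\<lambda>\<omega>. \<Sum>k\<in>{..n}. \<omega> (f k)) (erlang_density (card {..n} - 1) l)"
  proof (rule pps.exponential_distributed_sum)
    show "\<And>k. k \<in> {..n} \<Longrightarrow> distributed MM lborel (\<lambda>\<omega>. \<omega> (f k)) (exponential_density l)"
      using distributed_coord rl by metis
    show "pps.indep_vars (\<lambda>i. borel) (\<lambda>k \<omega>. \<omega> (f k)) {..n}"
      using indep_coords[of f "{..n}"] inj by (simp add: inj_on_subset)
  qed (auto simp: l)
  then have "\<P>(\<omega> in MM. (\<Sum>k\<in>{..n}. \<omega> (f k)) \<le> K) = erlang_CDF n l K"
    using pps.erlang_distributed_le[OF _ l K] by simp
  then show ?thesis by (simp add: space_MM)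
qed

end


lemma exp_density_le: "0 < l \<Longrightarrow> exponential_density l x \<le> l"
  by (auto simp: erlang_density_def)

lemma emeasure_exp_ball:
  assumes l: "0 < l" and e: "0 \<le> \<epsilon>"
  shows "emeasure (density lborel (exponential_density l)) {x. \<bar>x - c\<bar> < \<epsilon>} \<le> ennreal (2 * \<epsilon> * l)"
proof -
  have S: "{x. \<bar>x - c\<bar> < \<epsilon>} = {c - \<epsilon><..<c + \<epsilon>}" by auto
  have "emeasure (density lborel (exponential_density l)) {c - \<epsilon><..<c + \<epsilon>} =
        (\<integral>\<^sup>+x. ennreal (exponential_density l x) * indicator {c - \<epsilon><..<c + \<epsilon>} x \<partial>lborel)"
    by (subst emeasure_density) (auto simp: mult.commute)
  also have "\<dots> \<le> (\<integral>\<^sup>+x. ennreal l * indicator {c - \<epsilon><..<c + \<epsilon>} x \<partial>lborel)"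
    using exp_density_le[OF l] by (intro nn_integral_mono) (auto simp: indicator_def intro!: ennreal_leI)
  also have "\<dots> = ennreal l * emeasure lborel {c - \<epsilon><..<c + \<epsilon>}"
    by (rule nn_integral_cmult_indicator) simp
  also have "\<dots> = ennreal (2 * \<epsilon> * l)"
    using e l by (simp add: ennreal_mult[symmetric] mult.commute)
  finally show ?thesis unfolding S .
qed

context expmodel
begin

lemma close_bound:
  assumes Wm: "W \<in> borel_measurable M0" and Wi: "\<And>\<omega> x. W (fun_upd \<omega> i x) = W \<omega>" and e: "0 \<le> \<epsilon>"
  shows "pps.prob {\<omega>. \<bar>\<omega> i - W \<omega>\<bar> < \<epsilon>} \<le> 2 * \<epsilon> * rt i"
proof -
  define I where "I = UNIV - {i}"
  define P' where "P' = PiM I (Mi rt)"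
  define g where "g = (\<lambda>(x::real, X::idx \<Rightarrow> real). X(i := x))"
  interpret P': prob_space P' unfolding P'_def by (intro prob_space_PiM prob_Mi)
  interpret pair_sigma_finite "Mi rt i" P'
    by (intro pair_sigma_finite.intro prob_space_imp_sigma_finite prob_Mi P'.prob_space_axioms)
  have UI: "insert i I = UNIV" unfolding I_def by auto
  have distr_eq: "distr (Mi rt i \<Otimes>\<^sub>M P') MM g = MM"
    using distr_pair_PiM_eq_PiM[of I "Mi rt" i] prob_Mi unfolding UI P'_def g_def by simp
  have gm: "g \<in> measurable (Mi rt i \<Otimes>\<^sub>M P') MM"
  proof -
    have "(\<lambda>\<omega> j. (\<lambda>j (x, X). if j = i then x else X j) j \<omega>) \<in> measurable (Mi rt i \<Otimes>\<^sub>M P') (PiM UNIV (Mi rt))"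
    proof (rule measurable_PiM_single')
      fix j :: idx
      show "(\<lambda>(x, X). if j = i then x else X j) \<in> measurable (Mi rt i \<Otimes>\<^sub>M P') (Mi rt j)"
      proof (cases "j = i")
        case True
        then show ?thesis by (simp add: measurable_cong_sets[OF refl sets_density] case_prod_beta')
      next
        case False
        then have "j \<in> I" unfolding I_def by simp
        then have "(\<lambda>X. X j) \<in> measurable P' (Mi rt j)" unfolding P'_def by (rule measurable_component_singleton)
        then have "(\<lambda>p. snd p j) \<in> measurable (Mi rt i \<Otimes>\<^sub>M P') (Mi rt j)"
          by (rule measurable_compose[OF measurable_snd])
        then show ?thesis using False by (simp add: case_prod_beta')
      qed
    qed (auto simp: space_PiM)
    moreover have "(\<lambda>\<omega> j. (\<lambda>j (x, X). if j = i then x else X j) j \<omega>) = g"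
      unfolding g_def by (auto simp: fun_eq_iff)
    ultimately show ?thesis by simp
  qed
  define S where "S = {\<omega>. \<bar>\<omega> i - W \<omega>\<bar> < \<epsilon>}"
  have Sm: "S \<in> sets MM"
  proof -
    have "(\<lambda>\<omega>. \<bar>\<omega> i - W \<omega>\<bar>) \<in> borel_measurable M0"
      using Wm coord_meas by (intro borel_measurable_abs borel_measurable_diff)
    then have "{\<omega> \<in> space M0. \<bar>\<omega> i - W \<omega>\<bar> < \<epsilon>} \<in> sets M0" by (intro borel_measurable_less) auto
    then show ?thesis unfolding S_def using sets_MM by (simp add: space_PiM)
  qed
  have A: "g -` S \<inter> space (Mi rt i \<Otimes>\<^sub>M P') \<in> sets (Mi rt i \<Otimes>\<^sub>M P')"
    using gm Sm by (rule measurable_sets)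
  have "emeasure MM S = emeasure (Mi rt i \<Otimes>\<^sub>M P') (g -` S \<inter> space (Mi rt i \<Otimes>\<^sub>M P'))"
    by (subst distr_eq[symmetric]) (rule emeasure_distr[OF gm Sm])
  also have "\<dots> = (\<integral>\<^sup>+X. emeasure (Mi rt i) ((\<lambda>x. (x, X)) -` (g -` S \<inter> space (Mi rt i \<Otimes>\<^sub>M P'))) \<partial>P')"
    by (rule emeasure_pair_measure_alt2[OF A])
  also have "\<dots> \<le> (\<integral>\<^sup>+X. ennreal (2 * \<epsilon> * rt i) \<partial>P')"
  proof (rule nn_integral_mono)
    fix X assume X: "X \<in> space P'"
    have "(\<lambda>x. (x, X)) -` (g -` S \<inter> space (Mi rt i \<Otimes>\<^sub>M P')) \<subseteq> {x. \<bar>x - W (X(i := 0))\<bar> < \<epsilon>}"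
    proof
      fix x assume "x \<in> (\<lambda>x. (x, X)) -` (g -` S \<inter> space (Mi rt i \<Otimes>\<^sub>M P'))"
      then have "\<bar>x - W (X(i := x))\<bar> < \<epsilon>" by (simp add: g_def S_def)
      moreover have "W (X(i := x)) = W (X(i := 0))" using Wi[of "X(i := 0)" x] by simp
      ultimately show "x \<in> {x. \<bar>x - W (X(i := 0))\<bar> < \<epsilon>}" by simp
    qed
    then have "emeasure (Mi rt i) ((\<lambda>x. (x, X)) -` (g -` S \<inter> space (Mi rt i \<Otimes>\<^sub>M P'))) \<le>
        emeasure (Mi rt i) {x. \<bar>x - W (X(i := 0))\<bar> < \<epsilon>}"
      by (intro emeasure_mono) auto
    also have "\<dots> \<le> ennreal (2 * \<epsilon> * rt i)" by (rule emeasure_exp_ball[OF rt_pos e])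
    finally show "emeasure (Mi rt i) ((\<lambda>x. (x, X)) -` (g -` S \<inter> space (Mi rt i \<Otimes>\<^sub>M P'))) \<le> ennreal (2 * \<epsilon> * rt i)" .
  qed
  also have "\<dots> = ennreal (2 * \<epsilon> * rt i)" by (simp add: P'.emeasure_space_1)
  finally have "emeasure MM S \<le> ennreal (2 * \<epsilon> * rt i)" .
  then show ?thesis unfolding S_def[symmetric] using e rt_pos[of i]
    by (simp add: pps.emeasure_eq_measure)
qed

end


lemma nbrs_ne: "x \<in> nbrs d y \<Longrightarrow> x \<noteq> y"
  by (auto simp: nbrs_def)

lemma nbrs_sub:
  "nbrs d y \<subseteq> (\<lambda>ds. map2 (+) y ds) ` {ds. set ds \<subseteq> {-1,0,1} \<and> length ds = d}"
proof
  fix w assume w: "w \<in> nbrs d y"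
  then have len: "length w = d" "length y = d" and s: "(\<Sum>i<d. \<bar>y ! i - w ! i\<bar>) = 1"
    by (auto simp: nbrs_def)
  define ds where "ds = map2 (-) w y"
  have "\<bar>y ! i - w ! i\<bar> \<le> 1" if "i < d" for i
  proof -
    have "\<bar>y ! i - w ! i\<bar> \<le> (\<Sum>i<d. \<bar>y ! i - w ! i\<bar>)"
      using that by (intro member_le_sum) auto
    then show ?thesis using s by simp
  qed
  then have "ds ! i \<in> {-1,0,1}" if "i < d" for i
    using that len unfolding ds_def by (fastforce simp: abs_le_iff)
  then have "set ds \<subseteq> {-1,0,1}" using len unfolding ds_def by (metis in_set_conv_nth length_map length_zip min.idem subsetI)
  moreover have "length ds = d" using len by (simp add: ds_def)
  moreover have "map2 (+) y ds = w"
    using len by (intro nth_equalityI) (auto simp: ds_def)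
  ultimately show "w \<in> (\<lambda>ds. map2 (+) y ds) ` {ds. set ds \<subseteq> {-1,0,1} \<and> length ds = d}" by blast
qed

lemma nbrs_card: "finite (nbrs d y) \<and> card (nbrs d y) \<le> 3 ^ d"
proof -
  let ?S = "{ds :: int list. set ds \<subseteq> {-1,0,1} \<and> length ds = d}"
  have fin: "finite ?S" by (rule finite_lists_length_eq) simp
  have cS: "card ?S = 3 ^ d" by (subst card_lists_length_eq) (auto simp: numeral_3_eq_3)
  have "finite ((\<lambda>ds. map2 (+) y ds) ` ?S)" using fin by simp
  moreover have "card ((\<lambda>ds. map2 (+) y ds) ` ?S) \<le> 3 ^ d" using card_image_le[OF fin] cS by simp
  ultimately show ?thesis using nbrs_sub[of d y] by (meson card_mono finite_subset le_trans)
qed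


locale concrete =
  fixes p v lam :: real and d :: nat and y z :: site
  assumes p0: "0 < p" and p1: "p < 1" and v0: "0 < v" and lam0: "0 < lam"
begin

lemma rt_pos': "0 < rate p v lam i"
  using p0 p1 v0 lam0 by (cases i) auto

sublocale expmodel "rate p v lam"
  by unfold_locales (rule rt_pos')

definition NN where "NN = nbrs d y - {z}"

lemma NN_fin: "finite NN" unfolding NN_def using nbrs_card by auto
lemma NN_card: "card NN \<le> 3 ^ d"
  unfolding NN_def using nbrs_card[of d y] card_Diff1_le[of "nbrs d y" z] by linarith
lemma NN_ne: "x \<in> NN \<Longrightarrow> x \<noteq> y" unfolding NN_def using nbrs_ne by auto

lemma inj_Tm: "inj_on (\<lambda>x. Tm {x, y}) NN"
proof (rule inj_onI)
  fix x x' assume "x \<in> NN" "x' \<in> NN" "Tm {x, y} = Tm {x', y}"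
  then show "x = x'" using NN_ne by (auto simp: doubleton_eq_iff)
qed

definition Qset :: "real \<Rightarrow> nat \<Rightarrow> (idx \<Rightarrow> real) set" where
  "Qset h j = {\<omega>. \<omega> (Tp {y,z}) \<in> {real j * h<..(real j + 1) * h} \<and> \<omega> (Xs y) \<in> {(real j + 3) * h<..}}"

definition Rset :: "real \<Rightarrow> nat \<Rightarrow> (idx \<Rightarrow> real) set" where
  "Rset h j = {\<omega>. \<omega> (Xs y) \<in> {h<..real j * h} \<and> \<omega> (Tp {y,z}) \<in> {real j * h<..(real j + 1) * h} \<and>
                  (\<forall>x\<in>NN. \<omega> (Tm {x,y}) \<in> {(real j + 2) * h<..})}"

lemma probQ:
  assumes h: "0 < h"
  shows "pps.prob (Qset h j) = (exp (- (v * p) * (real j * h)) - exp (- (v * p) * ((real j + 1) * h))) * exp (- ((real j + 3) * h))"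
proof -
  define A where "A i = (if i = Tp {y,z} then {real j * h<..(real j + 1) * h} else {(real j + 3) * h<..})" for i :: idx
  have "Qset h j = {\<omega>. \<forall>i\<in>{Tp {y,z}, Xs y}. \<omega> i \<in> A i}" unfolding Qset_def A_def by auto
  moreover have "pps.prob {\<omega>. \<forall>i\<in>{Tp {y,z}, Xs y}. \<omega> i \<in> A i} = (\<Prod>i\<in>{Tp {y,z}, Xs y}. measure (Mi (rate p v lam) i) (A i))"
    by (rule prob_coords) (auto simp: A_def)
  ultimately have "pps.prob (Qset h j) = (\<Prod>i\<in>{Tp {y,z}, Xs y}. measure (Mi (rate p v lam) i) (A i))" by simp
  also have "\<dots> = measure (Mi (rate p v lam) (Tp {y,z})) {real j * h<..(real j + 1) * h} * measure (Mi (rate p v lam) (Xs y)) {(real j + 3) * h<..}"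
    by (simp add: A_def)
  also have "\<dots> = (exp (- (v * p) * (real j * h)) - exp (- (v * p) * ((real j + 1) * h))) * exp (- ((real j + 3) * h))"
  proof -
    have "0 \<le> real j * h" "real j * h \<le> (real j + 1) * h" "0 \<le> (real j + 3) * h" using h by (auto simp: mult_right_mono)
    then show ?thesis using measure_Ioc[of "real j * h" "(real j + 1) * h" "Tp {y,z}"] measure_gt[of "(real j + 3) * h" "Xs y"]
      by simp
  qed
  finally show ?thesis .
qed

lemma probR:
  assumes h: "0 < h"
  shows "pps.prob (Rset h j) \<ge> (exp (- h) - exp (- (real j * h))) * (exp (- (v * p) * (real j * h)) - exp (- (v * p) * ((real j + 1) * h)))
           * exp (- (v * (1 - p)) * card NN * ((real j + 2) * h))"
proof (cases "j = 0")
  case True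
  have "(exp (- h) - exp (- (real j * h))) \<le> 0" using True h by simp
  moreover have "0 \<le> exp (- (v * p) * (real j * h)) - exp (- (v * p) * ((real j + 1) * h))" using h p0 v0 by (simp add: mult_pos_pos)
  ultimately have "(exp (- h) - exp (- (real j * h))) * (exp (- (v * p) * (real j * h)) - exp (- (v * p) * ((real j + 1) * h)))
           * exp (- (v * (1 - p)) * card NN * ((real j + 2) * h)) \<le> 0"
    by (simp add: mult_nonpos_nonneg)
  then show ?thesis by (rule order_trans[OF _ measure_nonneg])
next
  case False
  then have j1: "1 \<le> real j" by simp
  define T where "T = (\<lambda>x. Tm {x, y}) ` NN"
  define J where "J = {Xs y, Tp {y,z}} \<union> T"
  define A where "A i = (if i = Xs y then {h<..real j * h} else if i = Tp {y,z} then {real j * h<..(real j + 1) * h} else {(real j + 2) * h<..})" for i :: idx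
  have finT: "finite T" unfolding T_def using NN_fin by simp
  have XT: "Xs y \<notin> T" "Tp {y,z} \<notin> T" unfolding T_def by auto
  have "Rset h j = {\<omega>. \<forall>i\<in>J. \<omega> i \<in> A i}" unfolding Rset_def J_def A_def T_def by auto
  moreover have "pps.prob {\<omega>. \<forall>i\<in>J. \<omega> i \<in> A i} = (\<Prod>i\<in>J. measure (Mi (rate p v lam) i) (A i))"
    using finT by (intro prob_coords) (auto simp: J_def A_def)
  ultimately have "pps.prob (Rset h j) = (\<Prod>i\<in>J. measure (Mi (rate p v lam) i) (A i))" by simp
  also have "\<dots> = measure (Mi (rate p v lam) (Xs y)) {h<..real j * h} * (measure (Mi (rate p v lam) (Tp {y,z})) {real j * h<..(real j + 1) * h}
        * (\<Prod>i\<in>T. measure (Mi (rate p v lam) i) (A i)))"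
    using finT XT unfolding J_def by (simp add: A_def)
  also have "(\<Prod>i\<in>T. measure (Mi (rate p v lam) i) (A i)) = (\<Prod>x\<in>NN. measure (Mi (rate p v lam) (Tm {x, y})) (A (Tm {x, y})))"
    unfolding T_def using inj_Tm by (simp add: prod.reindex)
  also have "\<dots> = (\<Prod>x\<in>NN. exp (- (v * (1 - p)) * ((real j + 2) * h)))"
  proof (rule prod.cong[OF refl])
    fix x assume "x \<in> NN"
    have "0 \<le> (real j + 2) * h" using h by simp
    then show "measure (Mi (rate p v lam) (Tm {x, y})) (A (Tm {x, y})) = exp (- (v * (1 - p)) * ((real j + 2) * h))"
      using measure_gt[of "(real j + 2) * h" "Tm {x,y}"] by (simp add: A_def)
  qed
  also have "\<dots> = exp (- (v * (1 - p)) * card NN * ((real j + 2) * h))"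
    by (simp add: exp_of_nat_mult[symmetric])
  finally have eq: "pps.prob (Rset h j) = measure (Mi (rate p v lam) (Xs y)) {h<..real j * h} * (measure (Mi (rate p v lam) (Tp {y,z})) {real j * h<..(real j + 1) * h}
        * exp (- (v * (1 - p)) * card NN * ((real j + 2) * h)))" .
  have "0 \<le> real j * h" "real j * h \<le> (real j + 1) * h" "h \<le> real j * h" "0 \<le> h" using h j1 by (auto simp: mult_right_mono)
  then have "measure (Mi (rate p v lam) (Xs y)) {h<..real j * h} = exp (- h) - exp (- (real j * h))"
     "measure (Mi (rate p v lam) (Tp {y,z})) {real j * h<..(real j + 1) * h} = exp (- (v * p) * (real j * h)) - exp (- (v * p) * ((real j + 1) * h))"
    using measure_Ioc[of "real j * h" "(real j + 1) * h" "Tp {y,z}"] measure_Ioc[of h "real j * h" "Xs y"] by simp_all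
  then have "pps.prob (Rset h j) = (exp (- h) - exp (- (real j * h))) * ((exp (- (v * p) * (real j * h)) - exp (- (v * p) * ((real j + 1) * h)))
           * exp (- (v * (1 - p)) * card NN * ((real j + 2) * h)))"
    using eq by simp
  then show ?thesis by (simp add: mult.assoc)
qed

end


context concrete
begin

definition Gd :: "real \<Rightarrow> real \<Rightarrow> real \<Rightarrow> nat \<Rightarrow> nat \<Rightarrow> (idx \<Rightarrow> real) \<Rightarrow> bool" where
  "Gd h \<delta> K Nr Ni \<omega> \<longleftrightarrow>
     \<omega> (Xo (y,z)) \<le> \<delta> \<and> h < \<omega> (Tm {y,z}) \<and> h < \<omega> (Xs' y) \<and>
     (\<forall>x\<in>NN. \<omega> (Xo (x,y)) \<le> \<delta>) \<and> (\<forall>x\<in>NN. 2*h < \<omega> (Xs x)) \<and>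
     (\<forall>w\<in>insert y NN. \<forall>k. 0 \<le> \<omega> (Cs w k)) \<and> (\<forall>x\<in>NN. \<forall>k. 0 \<le> \<omega> (Ce {x,y} k)) \<and>
     (\<forall>w\<in>insert y NN. \<forall>k\<le>Nr. 2*\<delta> < \<omega> (Cs w k)) \<and>
     (\<forall>w\<in>insert y NN. K < (\<Sum>k\<le>Nr. \<omega> (Cs w k))) \<and>
     (\<forall>x\<in>NN. \<forall>k\<le>Ni. \<omega> (Ce {x,y} k) \<le> \<delta>) \<and>
     (\<forall>x\<in>NN. K < (\<Sum>k\<le>Ni. \<omega> (Ce {x,y} k))) \<and>
     (\<forall>x\<in>NN. \<forall>n\<le>Suc Nr. \<forall>m\<le>Suc Nr. 2*\<delta> \<le> \<bar>rho (\<omega> (Xs x) - \<omega> (Xo (x,y))) (\<lambda>k. \<omega> (Cs x k)) n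
                       - rho (\<omega> (Xs y)) (\<lambda>k. \<omega> (Cs y k)) m\<bar>) \<and>
     (\<forall>m\<le>Suc Nr. \<delta> \<le> \<bar>rho (\<omega> (Xs y)) (\<lambda>k. \<omega> (Cs y k)) m - \<omega> (Tp {y,z})\<bar>)"

lemma zu_one: "(\<And>x. x \<in> NN \<Longrightarrow> zeta \<omega> x y z = 1) \<Longrightarrow> zeta_under d \<omega> y z = 1"
  unfolding zeta_under_def NN_def[symmetric] by simp

lemma good_Q:
  assumes h: "0 < h" and dh: "\<delta> \<le> h" and Q: "\<omega> \<in> Qset h j" and G: "Gd h \<delta> K Nr Ni \<omega>"
  shows "zeta_under d \<omega> y z = 1"
proof (rule zu_one)
  fix x assume "x \<in> NN"
  have T: "\<omega> (Tp {y,z}) + 2*h < \<omega> (Xs y)" using Q h unfolding Qset_def by (auto simp: algebra_simps)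
  have a: "\<omega> (Xo (y,z)) \<le> \<delta>" "h < \<omega> (Tm {y,z})" using G unfolding Gd_def by auto
  have "\<omega> (Tp {y,z}) < \<omega> (Xs y)" using T h by simp
  moreover have "\<omega> (Xo (y,z)) < min (\<omega> (Xs y) - \<omega> (Tp {y,z})) (\<omega> (Tm {y,z}))" using T a dh h by auto
  ultimately show "zeta \<omega> x y z = 1" unfolding zeta_def Let_def ind_def by auto
qed

lemma good_R:
  assumes h: "0 < h" and d0: "0 < \<delta>" and dh: "\<delta> \<le> h" and jJ: "j < J" and K: "K = real J * h"
    and R: "\<omega> \<in> Rset h j" and G: "Gd h \<delta> K Nr Ni \<omega>"
  shows "zeta_under d \<omega> y z = 1"
proof (rule zu_one)
  fix x assume x: "x \<in> NN"
  have xy: "x \<noteq> y" using NN_ne[OF x] .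
  let ?t = "\<omega> (Tp {y,z})"
  have R1: "h < \<omega> (Xs y)" "\<omega> (Xs y) \<le> real j * h" "real j * h < ?t" "?t \<le> (real j + 1) * h"
    "(real j + 2) * h < \<omega> (Tm {x,y})"
    using R x unfolding Rset_def by auto
  have tK: "?t \<le> K"
  proof -
    have "(real j + 1) * h \<le> real J * h" using jJ h by (intro mult_right_mono) auto
    then show ?thesis using R1 K by simp
  qed
  have t0: "0 \<le> ?t" using R1 h by (smt (verit) mult_nonneg_nonneg of_nat_0_le_iff)
  have Gx: "\<omega> (Xo (x,y)) \<le> \<delta>" "2*h < \<omega> (Xs x)" using G x unfolding Gd_def by auto
  have Gyz: "\<omega> (Xo (y,z)) \<le> \<delta>" "h < \<omega> (Tm {y,z})" "h < \<omega> (Xs' y)" using G unfolding Gd_def by auto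
  have "y \<in> eta \<omega> x y ?t"
  proof (rule surv_concrete[OF xy d0 dh t0 tK Gx(2) Gx(1) R1(1)])
    show "\<forall>k. 0 \<le> \<omega> (Cs x k)" "\<forall>k. 0 \<le> \<omega> (Cs y k)" using G x unfolding Gd_def by auto
    show "\<forall>k\<le>Nr. 2 * \<delta> < \<omega> (Cs x k)" "K < (\<Sum>k\<le>Nr. \<omega> (Cs x k))" using G x unfolding Gd_def by auto
    show "\<forall>k\<le>Nr. 2 * \<delta> < \<omega> (Cs y k)" "K < (\<Sum>k\<le>Nr. \<omega> (Cs y k))" using G unfolding Gd_def by auto
    show "\<forall>n\<le>Suc Nr. \<forall>m\<le>Suc Nr. 2 * \<delta> \<le> \<bar>rho (\<omega> (Xs x) - \<omega> (Xo (x, y))) (\<lambda>k. \<omega> (Cs x k)) n -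
          rho (\<omega> (Xs y)) (\<lambda>k. \<omega> (Cs y k)) m\<bar>" using G x unfolding Gd_def by auto
    show "\<forall>m\<le>Suc Nr. \<delta> \<le> \<bar>rho (\<omega> (Xs y)) (\<lambda>k. \<omega> (Cs y k)) m - ?t\<bar>" using G unfolding Gd_def by auto
    show "\<forall>k\<le>Ni. 0 \<le> \<omega> (Ce {x, y} k) \<and> \<omega> (Ce {x, y} k) \<le> \<delta>" "K < (\<Sum>k\<le>Ni. \<omega> (Ce {x, y} k))"
      using G x unfolding Gd_def by auto
  qed
  moreover have "\<omega> (Xs y) < ?t" using R1 by simp
  moreover have "\<not> ?t < \<omega> (Xs y)" using R1 by simp
  moreover have "?t < \<omega> (Tm {x, y}) - \<omega> (Xo (x, y))"
  proof -
    have "?t + h \<le> (real j + 2) * h" using R1 by (simp add: algebra_simps)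
    then show ?thesis using R1 Gx dh by simp
  qed
  moreover have "\<omega> (Xo (y,z)) < min (\<omega> (Xs' y)) (\<omega> (Tm {y,z}))" using Gyz dh by auto
  ultimately show "zeta \<omega> x y z = 1" unfolding zeta_def Let_def ind_def by auto
qed

end


context expmodel
begin

lemma ev: "Measurable.pred M0 P \<Longrightarrow> {\<omega>. P \<omega>} \<in> pps.events"
  unfolding pred_def using sets_MM by (simp add: space_PiM)

lemma union_le: "Measurable.pred M0 A \<Longrightarrow> Measurable.pred M0 B \<Longrightarrow>
   pps.prob {\<omega>. A \<omega> \<or> B \<omega>} \<le> pps.prob {\<omega>. A \<omega>} + pps.prob {\<omega>. B \<omega>}"
proof -
  assume a: "Measurable.pred M0 A" "Measurable.pred M0 B"
  have "{\<omega>. A \<omega> \<or> B \<omega>} = {\<omega>. A \<omega>} \<union> {\<omega>. B \<omega>}" by auto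
  then show ?thesis using measure_Un_le[OF ev[OF a(1)] ev[OF a(2)]] by simp
qed

lemma ex_le:
  fixes c :: real
  assumes "finite I" "\<And>i. i \<in> I \<Longrightarrow> Measurable.pred M0 (B i)" "\<And>i. i \<in> I \<Longrightarrow> pps.prob {\<omega>. B i \<omega>} \<le> c"
  shows "pps.prob {\<omega>. \<exists>i\<in>I. B i \<omega>} \<le> card I * c"
proof -
  have "{\<omega>. \<exists>i\<in>I. B i \<omega>} = (\<Union>i\<in>I. {\<omega>. B i \<omega>})" by auto
  have "pps.prob {\<omega>. \<exists>i\<in>I. B i \<omega>} \<le> (\<Sum>i\<in>I. pps.prob {\<omega>. B i \<omega>})"
  proof -
    have "(\<lambda>i. {\<omega>. B i \<omega>}) ` I \<subseteq> pps.events" using assms(2) ev by blast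
    then show ?thesis using pps.P.finite_measure_subadditive_finite[of I "\<lambda>i. {\<omega>. B i \<omega>}"] assms(1) \<open>{\<omega>. \<exists>i\<in>I. B i \<omega>} = (\<Union>i\<in>I. {\<omega>. B i \<omega>})\<close>
      by simp
  qed
  also have "\<dots> \<le> (\<Sum>i\<in>I. c)" using assms by (intro sum_mono) auto
  finally show ?thesis by simp
qed

lemma mono_le: "(\<And>\<omega>. A \<omega> \<Longrightarrow> B \<omega>) \<Longrightarrow> Measurable.pred M0 B \<Longrightarrow> pps.prob {\<omega>. A \<omega>} \<le> pps.prob {\<omega>. B \<omega>}"
proof -
  assume a: "\<And>\<omega>. A \<omega> \<Longrightarrow> B \<omega>" "Measurable.pred M0 B"
  have "{\<omega>. A \<omega>} \<subseteq> {\<omega>. B \<omega>}" using a(1) by blast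
  then show ?thesis by (rule pps.P.finite_measure_mono[OF _ ev[OF a(2)]])
qed

lemma p_gt: "0 \<le> a \<Longrightarrow> pps.prob {\<omega>. a < \<omega> i} = exp (- rt i * a)"
  using prob_coord[of "{a<..}" i] measure_gt[of a i] by simp

lemma p_le: "0 \<le> a \<Longrightarrow> pps.prob {\<omega>. \<omega> i \<le> a} = 1 - exp (- rt i * a)"
  using prob_coord[of "{..a}" i] measure_le[of a i] by simp

lemma p_neg: "pps.prob {\<omega>. \<omega> i < 0} = 0"
proof -
  have "pps.prob {\<omega>. \<omega> i < 0} \<le> pps.prob {\<omega>. \<omega> i \<le> 0}"
  proof (rule mono_le)
    show "Measurable.pred M0 (\<lambda>\<omega>. \<omega> i \<le> 0)" by measurable
  qed simp
  moreover have "pps.prob {\<omega>. \<omega> i \<le> 0} = 0" using p_le[of 0 i] by simp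
  moreover have "0 \<le> pps.prob {\<omega>. \<omega> i < 0}" by (rule measure_nonneg)
  ultimately show ?thesis by linarith
qed

end


context concrete
begin

lemma rate_simps: "rate p v lam (Xo e) = lam" "rate p v lam (Tm s) = v * (1 - p)" "rate p v lam (Tp s) = v * p"
  "rate p v lam (Xs x) = 1" "rate p v lam (Xs' x) = 1" "rate p v lam (Cs x k) = 1" "rate p v lam (Ce s k) = lam"
  by simp_all

lemma B6: "pps.prob {\<omega>. (\<exists>w\<in>insert y NN. \<exists>k. \<omega> (Cs w k) < 0) \<or> (\<exists>x\<in>NN. \<exists>k. \<omega> (Ce {x,y} k) < 0)} = 0"
proof -
  have ae1: "AE \<omega> in MM. \<not> \<omega> i < 0" for i
  proof -
    have "{\<omega>. \<omega> i < 0} \<in> pps.events" by (rule ev) measurable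
    then have "AE \<omega> in MM. \<omega> \<notin> {\<omega>. \<omega> i < 0}" using pps.P.prob_eq_0 p_neg by blast
    then show ?thesis by simp
  qed
  have c1: "countable (insert y NN)" "countable NN" using NN_fin by (auto intro: countable_finite)
  have "AE \<omega> in MM. (\<forall>w\<in>insert y NN. \<forall>k. \<not> \<omega> (Cs w k) < 0) \<and> (\<forall>x\<in>NN. \<forall>k. \<not> \<omega> (Ce {x,y} k) < 0)"
    using ae1 c1 by (auto simp: AE_ball_countable AE_all_countable)
  moreover have "{\<omega>. (\<exists>w\<in>insert y NN. \<exists>k. \<omega> (Cs w k) < 0) \<or> (\<exists>x\<in>NN. \<exists>k. \<omega> (Ce {x,y} k) < 0)} \<in> pps.events"
    by (rule ev) measurable
  ultimately show ?thesis using pps.P.prob_eq_0 by (auto elim!: eventually_mono)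
qed

lemma B11:
  fixes \<delta> :: real
  assumes d0: "0 \<le> \<delta>"
  shows "pps.prob {\<omega>. \<exists>(x,n,m)\<in>NN \<times> {..Suc Nr} \<times> {..Suc Nr}.
     \<bar>rho (\<omega> (Xs x) - \<omega> (Xo (x,y))) (\<lambda>k. \<omega> (Cs x k)) n - rho (\<omega> (Xs y)) (\<lambda>k. \<omega> (Cs y k)) m\<bar> < 2*\<delta>}
     \<le> card NN * (Suc (Suc Nr))^2 * (4*\<delta>)"
proof -
  have "pps.prob {\<omega>. \<exists>i\<in>NN \<times> {..Suc Nr} \<times> {..Suc Nr}. (\<lambda>(x,n,m) \<omega>.
     \<bar>rho (\<omega> (Xs x) - \<omega> (Xo (x,y))) (\<lambda>k. \<omega> (Cs x k)) n - rho (\<omega> (Xs y)) (\<lambda>k. \<omega> (Cs y k)) m\<bar> < 2*\<delta>) i \<omega>}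
     \<le> card (NN \<times> {..Suc Nr} \<times> {..Suc Nr}) * (4*\<delta>)"
  proof (rule ex_le)
    show "finite (NN \<times> {..Suc Nr} \<times> {..Suc Nr})" using NN_fin by simp
  next
    fix i assume "i \<in> NN \<times> {..Suc Nr} \<times> {..Suc Nr}"
    then obtain x n m where i: "i = (x,n,m)" and x: "x \<in> NN" by auto
    show "Measurable.pred M0 ((\<lambda>(x,n,m) \<omega>.
     \<bar>rho (\<omega> (Xs x) - \<omega> (Xo (x,y))) (\<lambda>k. \<omega> (Cs x k)) n - rho (\<omega> (Xs y)) (\<lambda>k. \<omega> (Cs y k)) m\<bar> < 2*\<delta>) i)"
      unfolding i rho_def prod.case by measurable
    define W where "W \<omega> = \<omega> (Xo (x,y)) - (\<Sum>k<n. \<omega> (Cs x k)) + rho (\<omega> (Xs y)) (\<lambda>k. \<omega> (Cs y k)) m" for \<omega> :: "idx \<Rightarrow> real"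
    have xy: "x \<noteq> y" using NN_ne[OF x] .
    have Wm: "W \<in> borel_measurable M0" unfolding W_def rho_def by measurable
    have Wi: "W (fun_upd \<omega> (Xs x) t) = W \<omega>" for \<omega> t using xy unfolding W_def rho_def by simp
    have "{\<omega>. (\<lambda>(x,n,m) \<omega>.
     \<bar>rho (\<omega> (Xs x) - \<omega> (Xo (x,y))) (\<lambda>k. \<omega> (Cs x k)) n - rho (\<omega> (Xs y)) (\<lambda>k. \<omega> (Cs y k)) m\<bar> < 2*\<delta>) i \<omega>}
       = {\<omega>. \<bar>\<omega> (Xs x) - W \<omega>\<bar> < 2*\<delta>}"
      unfolding i W_def rho_def by (auto simp: algebra_simps)
    moreover have "pps.prob {\<omega>. \<bar>\<omega> (Xs x) - W \<omega>\<bar> < 2*\<delta>} \<le> 2 * (2*\<delta>) * rate p v lam (Xs x)"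
      using d0 by (intro close_bound Wm Wi) simp
    ultimately show "pps.prob {\<omega>. (\<lambda>(x,n,m) \<omega>.
     \<bar>rho (\<omega> (Xs x) - \<omega> (Xo (x,y))) (\<lambda>k. \<omega> (Cs x k)) n - rho (\<omega> (Xs y)) (\<lambda>k. \<omega> (Cs y k)) m\<bar> < 2*\<delta>) i \<omega>}
       \<le> 4 * \<delta>" by simp
  qed
  moreover have "card (NN \<times> {..Suc Nr} \<times> {..Suc Nr}) = card NN * (Suc (Suc Nr))^2"
    by (simp add: card_cartesian_product power2_eq_square)
  ultimately show ?thesis by (simp add: case_prod_beta')
qed

lemma B12:
  fixes \<delta> :: real
  assumes d0: "0 \<le> \<delta>"
  shows "pps.prob {\<omega>. \<exists>m\<in>{..Suc Nr}. \<bar>rho (\<omega> (Xs y)) (\<lambda>k. \<omega> (Cs y k)) m - \<omega> (Tp {y,z})\<bar> < \<delta>}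
     \<le> (Suc (Suc Nr)) * (2 * \<delta> * (v * p))"
proof -
  have "pps.prob {\<omega>. \<exists>m\<in>{..Suc Nr}. \<bar>rho (\<omega> (Xs y)) (\<lambda>k. \<omega> (Cs y k)) m - \<omega> (Tp {y,z})\<bar> < \<delta>}
     \<le> card {..Suc Nr} * (2 * \<delta> * (v * p))"
  proof (rule ex_le)
    fix m :: nat
    show "Measurable.pred M0 (\<lambda>\<omega>. \<bar>rho (\<omega> (Xs y)) (\<lambda>k. \<omega> (Cs y k)) m - \<omega> (Tp {y,z})\<bar> < \<delta>)"
      unfolding rho_def by measurable
    define W where "W \<omega> = rho (\<omega> (Xs y)) (\<lambda>k. \<omega> (Cs y k)) m" for \<omega> :: "idx \<Rightarrow> real"
    have Wm: "W \<in> borel_measurable M0" unfolding W_def rho_def by measurable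
    have Wi: "W (fun_upd \<omega> (Tp {y,z}) t) = W \<omega>" for \<omega> t unfolding W_def rho_def by simp
    have "{\<omega>. \<bar>rho (\<omega> (Xs y)) (\<lambda>k. \<omega> (Cs y k)) m - \<omega> (Tp {y,z})\<bar> < \<delta>} = {\<omega>. \<bar>\<omega> (Tp {y,z}) - W \<omega>\<bar> < \<delta>}"
      unfolding W_def by (auto simp: abs_minus_commute)
    moreover have "pps.prob {\<omega>. \<bar>\<omega> (Tp {y,z}) - W \<omega>\<bar> < \<delta>} \<le> 2 * \<delta> * rate p v lam (Tp {y,z})"
      using d0 by (intro close_bound Wm Wi)
    ultimately show "pps.prob {\<omega>. \<bar>rho (\<omega> (Xs y)) (\<lambda>k. \<omega> (Cs y k)) m - \<omega> (Tp {y,z})\<bar> < \<delta>} \<le> 2 * \<delta> * (v * p)"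
      by simp
  qed simp
  then show ?thesis by simp
qed

end


context concrete
begin

lemma NN_y: "y \<notin> NN" using NN_ne by blast

lemma addle: "Measurable.pred M0 A \<Longrightarrow> Measurable.pred M0 B \<Longrightarrow> pps.prob {\<omega>. A \<omega>} \<le> a \<Longrightarrow> pps.prob {\<omega>. B \<omega>} \<le> b
   \<Longrightarrow> pps.prob {\<omega>. A \<omega> \<or> B \<omega>} \<le> a + b"
  using union_le[of A B] by linarith

lemma B_gt: "0 \<le> a \<Longrightarrow> pps.prob {\<omega>. a < \<omega> i} \<le> exp (- rate p v lam i * a)"
  using p_gt by simp
lemma B_le: "0 \<le> a \<Longrightarrow> pps.prob {\<omega>. \<omega> i \<le> a} \<le> 1 - exp (- rate p v lam i * a)"
  using p_le by simp

lemma B4: "0 \<le> \<delta> \<Longrightarrow> pps.prob {\<omega>. \<exists>x\<in>NN. \<delta> < \<omega> (Xo (x,y))} \<le> card NN * exp (- lam * \<delta>)"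
  using NN_fin by (intro ex_le) (auto simp: p_gt)

lemma B5: "0 \<le> h \<Longrightarrow> pps.prob {\<omega>. \<exists>x\<in>NN. \<omega> (Xs x) \<le> 2*h} \<le> card NN * (1 - exp (- (2*h)))"
  using NN_fin by (intro ex_le) (auto simp: p_le)

lemma B7: "0 \<le> \<delta> \<Longrightarrow> pps.prob {\<omega>. \<exists>(w,k)\<in>insert y NN \<times> {..Nr}. \<omega> (Cs w k) \<le> 2*\<delta>}
   \<le> (card NN + 1) * (Nr + 1) * (1 - exp (- (2*\<delta>)))"
proof -
  assume d: "0 \<le> \<delta>"
  have "pps.prob {\<omega>. \<exists>i\<in>insert y NN \<times> {..Nr}. (\<lambda>(w,k) \<omega>. \<omega> (Cs w k) \<le> 2*\<delta>) i \<omega>}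
    \<le> card (insert y NN \<times> {..Nr}) * (1 - exp (- (2*\<delta>)))"
    using NN_fin d by (intro ex_le) (auto simp: p_le)
  moreover have "card (insert y NN \<times> {..Nr}) = (card NN + 1) * (Nr + 1)"
    using NN_fin NN_y by (simp add: card_cartesian_product card_insert_if)
  ultimately show ?thesis by (simp add: case_prod_beta')
qed

lemma B8: "0 \<le> K \<Longrightarrow> pps.prob {\<omega>. \<exists>w\<in>insert y NN. (\<Sum>k\<le>Nr. \<omega> (Cs w k)) \<le> K}
   \<le> (card NN + 1) * erlang_CDF Nr 1 K"
proof -
  assume K: "0 \<le> K"
  have "pps.prob {\<omega>. \<exists>w\<in>insert y NN. (\<Sum>k\<le>Nr. \<omega> (Cs w k)) \<le> K} \<le> card (insert y NN) * erlang_CDF Nr 1 K"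
  proof (rule ex_le)
    fix w
    show "pps.prob {\<omega>. (\<Sum>k\<le>Nr. \<omega> (Cs w k)) \<le> K} \<le> erlang_CDF Nr 1 K"
      using erlang_sum[of "Cs w" 1 K Nr] K by (simp add: inj_def)
  qed (use NN_fin in auto)
  then show ?thesis using NN_fin NN_y by (simp add: card_insert_if)
qed

lemma B9: "0 \<le> \<delta> \<Longrightarrow> pps.prob {\<omega>. \<exists>(x,k)\<in>NN \<times> {..Ni}. \<delta> < \<omega> (Ce {x,y} k)}
   \<le> card NN * (Ni + 1) * exp (- lam * \<delta>)"
proof -
  assume d: "0 \<le> \<delta>"
  have "pps.prob {\<omega>. \<exists>i\<in>NN \<times> {..Ni}. (\<lambda>(x,k) \<omega>. \<delta> < \<omega> (Ce {x,y} k)) i \<omega>}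
    \<le> card (NN \<times> {..Ni}) * exp (- lam * \<delta>)"
    using NN_fin d by (intro ex_le) (auto simp: p_gt)
  moreover have "card (NN \<times> {..Ni}) = card NN * (Ni + 1)"
    by (simp add: card_cartesian_product)
  ultimately show ?thesis by (simp add: case_prod_beta')
qed

lemma B10: "0 \<le> K \<Longrightarrow> pps.prob {\<omega>. \<exists>x\<in>NN. (\<Sum>k\<le>Ni. \<omega> (Ce {x,y} k)) \<le> K}
   \<le> card NN * erlang_CDF Ni lam K"
proof -
  assume K: "0 \<le> K"
  show ?thesis
  proof (rule ex_le)
    fix x
    show "pps.prob {\<omega>. (\<Sum>k\<le>Ni. \<omega> (Ce {x,y} k)) \<le> K} \<le> erlang_CDF Ni lam K"
      using erlang_sum[of "Ce {x,y}" lam K Ni] K by (simp add: inj_def)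
  qed (use NN_fin in auto)
qed

end


context concrete
begin

definition badsum :: "real \<Rightarrow> real \<Rightarrow> real \<Rightarrow> nat \<Rightarrow> nat \<Rightarrow> real" where
  "badsum h \<delta> K Nr Ni = exp (- lam * \<delta>) + (1 - exp (- (v * (1 - p)) * h)) + (1 - exp (- h))
    + real (card NN) * exp (- lam * \<delta>) + real (card NN) * (1 - exp (- (2*h))) + 0
    + (real (card NN) + 1) * (real Nr + 1) * (1 - exp (- (2*\<delta>))) + (real (card NN) + 1) * erlang_CDF Nr 1 K
    + real (card NN) * (real Ni + 1) * exp (- lam * \<delta>) + real (card NN) * erlang_CDF Ni lam K
    + real (card NN) * (real Nr + 2)^2 * (4*\<delta>) + (real Nr + 2) * (2 * \<delta> * (v * p))"

lemma my_disj: "Measurable.pred M P \<Longrightarrow> Measurable.pred M Q \<Longrightarrow> Measurable.pred M (\<lambda>x. P x \<or> Q x)"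
  by measurable

lemma bad_total:
  assumes h: "0 < h" and d: "0 < \<delta>" and K: "0 \<le> K"
  shows "pps.prob {\<omega>. \<not> Gd h \<delta> K Nr Ni \<omega>} \<le> badsum h \<delta> K Nr Ni"
proof -
  let ?b1 = "\<lambda>\<omega>. \<delta> < \<omega> (Xo (y,z))"
  let ?b2 = "\<lambda>\<omega>. \<omega> (Tm {y,z}) \<le> h"
  let ?b3 = "\<lambda>\<omega>. \<omega> (Xs' y) \<le> h"
  let ?b4 = "\<lambda>\<omega>. \<exists>x\<in>NN. \<delta> < \<omega> (Xo (x,y))"
  let ?b5 = "\<lambda>\<omega>. \<exists>x\<in>NN. \<omega> (Xs x) \<le> 2*h"
  let ?b6 = "\<lambda>\<omega>. (\<exists>w\<in>insert y NN. \<exists>k. \<omega> (Cs w k) < 0) \<or> (\<exists>x\<in>NN. \<exists>k. \<omega> (Ce {x,y} k) < 0)"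
  let ?b7 = "\<lambda>\<omega>. \<exists>(w,k)\<in>insert y NN \<times> {..Nr}. \<omega> (Cs w k) \<le> 2*\<delta>"
  let ?b8 = "\<lambda>\<omega>. \<exists>w\<in>insert y NN. (\<Sum>k\<le>Nr. \<omega> (Cs w k)) \<le> K"
  let ?b9 = "\<lambda>\<omega>. \<exists>(x,k)\<in>NN \<times> {..Ni}. \<delta> < \<omega> (Ce {x,y} k)"
  let ?b10 = "\<lambda>\<omega>. \<exists>x\<in>NN. (\<Sum>k\<le>Ni. \<omega> (Ce {x,y} k)) \<le> K"
  let ?b11 = "\<lambda>\<omega>. \<exists>(x,n,m)\<in>NN \<times> {..Suc Nr} \<times> {..Suc Nr}.
     \<bar>rho (\<omega> (Xs x) - \<omega> (Xo (x,y))) (\<lambda>k. \<omega> (Cs x k)) n - rho (\<omega> (Xs y)) (\<lambda>k. \<omega> (Cs y k)) m\<bar> < 2*\<delta>"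
  let ?b12 = "\<lambda>\<omega>. \<exists>m\<in>{..Suc Nr}. \<bar>rho (\<omega> (Xs y)) (\<lambda>k. \<omega> (Cs y k)) m - \<omega> (Tp {y,z})\<bar> < \<delta>"
  have m1: "Measurable.pred M0 ?b1" by measurable
  have m2: "Measurable.pred M0 ?b2" by measurable
  have m3: "Measurable.pred M0 ?b3" by measurable
  have m4: "Measurable.pred M0 ?b4" by measurable
  have m5: "Measurable.pred M0 ?b5" by measurable
  have m6: "Measurable.pred M0 ?b6" by measurable
  have m7: "Measurable.pred M0 ?b7" unfolding Bex_def by measurable
  have m8: "Measurable.pred M0 ?b8" by measurable
  have m9: "Measurable.pred M0 ?b9" unfolding Bex_def by measurable
  have m10: "Measurable.pred M0 ?b10" by measurable
  have m11: "Measurable.pred M0 ?b11" unfolding Bex_def rho_def by measurable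
  have m12: "Measurable.pred M0 ?b12" unfolding rho_def by measurable
  have sub: "?b1 \<omega> \<or> ?b2 \<omega> \<or> ?b3 \<omega> \<or> ?b4 \<omega> \<or> ?b5 \<omega> \<or> ?b6 \<omega> \<or> ?b7 \<omega> \<or> ?b8 \<omega> \<or> ?b9 \<omega> \<or> ?b10 \<omega> \<or> ?b11 \<omega> \<or> ?b12 \<omega>"
    if "\<not> Gd h \<delta> K Nr Ni \<omega>" for \<omega>
    using that unfolding Gd_def by (auto simp: not_le not_less)
  have "pps.prob {\<omega>. \<not> Gd h \<delta> K Nr Ni \<omega>} \<le> pps.prob {\<omega>. ?b1 \<omega> \<or> ?b2 \<omega> \<or> ?b3 \<omega> \<or> ?b4 \<omega> \<or> ?b5 \<omega> \<or> ?b6 \<omega> \<or> ?b7 \<omega> \<or> ?b8 \<omega> \<or> ?b9 \<omega> \<or> ?b10 \<omega> \<or> ?b11 \<omega> \<or> ?b12 \<omega>}"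
  proof (rule mono_le)
    show "\<And>\<omega>. \<not> Gd h \<delta> K Nr Ni \<omega> \<Longrightarrow> ?b1 \<omega> \<or> ?b2 \<omega> \<or> ?b3 \<omega> \<or> ?b4 \<omega> \<or> ?b5 \<omega> \<or> ?b6 \<omega> \<or> ?b7 \<omega> \<or> ?b8 \<omega> \<or> ?b9 \<omega> \<or> ?b10 \<omega> \<or> ?b11 \<omega> \<or> ?b12 \<omega>"
      by (rule sub)
    show "Measurable.pred M0 (\<lambda>\<omega>. ?b1 \<omega> \<or> ?b2 \<omega> \<or> ?b3 \<omega> \<or> ?b4 \<omega> \<or> ?b5 \<omega> \<or> ?b6 \<omega> \<or> ?b7 \<omega> \<or> ?b8 \<omega> \<or> ?b9 \<omega> \<or> ?b10 \<omega> \<or> ?b11 \<omega> \<or> ?b12 \<omega>)"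
      by (intro pred_intros_logic m1 m2 m3 m4 m5 m6 m7 m8 m9 m10 m11 m12)
  qed
  also have "\<dots> \<le> badsum h \<delta> K Nr Ni"
    apply (rule order_trans[OF addle[OF m1 _ B_gt]])
     apply (rule m1 m2 m3 m4 m5 m6 m7 m8 m9 m10 m11 m12 my_disj)+
    using d apply simp
    apply (rule addle[OF m2 _ B_le])
     apply (rule m1 m2 m3 m4 m5 m6 m7 m8 m9 m10 m11 m12 my_disj)+
    using h apply simp
    apply (rule addle[OF m3 _ B_le])
     apply (rule m1 m2 m3 m4 m5 m6 m7 m8 m9 m10 m11 m12 my_disj)+
    using h apply simp
    apply (rule addle[OF m4 _ B4])
     apply (rule m1 m2 m3 m4 m5 m6 m7 m8 m9 m10 m11 m12 my_disj)+
    using d apply simp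
    apply (rule addle[OF m5 _ B5])
     apply (rule m1 m2 m3 m4 m5 m6 m7 m8 m9 m10 m11 m12 my_disj)+
    using h apply simp
    apply (rule addle[OF m6 _ eq_refl[OF B6]])
     apply (rule m1 m2 m3 m4 m5 m6 m7 m8 m9 m10 m11 m12 my_disj)+
    apply (rule addle[OF m7 _ B7])
     apply (rule m1 m2 m3 m4 m5 m6 m7 m8 m9 m10 m11 m12 my_disj)+
    using d apply simp
    apply (rule addle[OF m8 _ B8])
     apply (rule m1 m2 m3 m4 m5 m6 m7 m8 m9 m10 m11 m12 my_disj)+
    using K apply simp
    apply (rule addle[OF m9 _ B9])
     apply (rule m1 m2 m3 m4 m5 m6 m7 m8 m9 m10 m11 m12 my_disj)+
    using d apply simp
    apply (rule addle[OF m10 _ B10])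
     apply (rule m1 m2 m3 m4 m5 m6 m7 m8 m9 m10 m11 m12 my_disj)+
    using K apply simp
    apply (rule addle[OF m11 m12 B11 B12])
    using d apply simp
    using d apply simp
    apply (simp add: badsum_def algebra_simps)
    done
  finally show ?thesis .
qed

end


context concrete
begin

lemma model_eq: "model p v lam = MM" unfolding model_def ..

lemma interval_unique:
  fixes h t :: real
  assumes h: "0 < h" and a: "real j * h < t" "t \<le> (real j + 1) * h" and b: "real j' * h < t" "t \<le> (real j' + 1) * h"
  shows "j = j'"
proof (rule ccontr)
  assume "j \<noteq> j'"
  then have "j < j' \<or> j' < j" by auto
  then show False
  proof
    assume "j < j'"
    then have "real j + 1 \<le> real j'" by simp
    then have "(real j + 1) * h \<le> real j' * h" using h by (intro mult_right_mono) auto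
    then show False using a b by simp
  next
    assume "j' < j"
    then have "real j' + 1 \<le> real j" by simp
    then have "(real j' + 1) * h \<le> real j * h" using h by (intro mult_right_mono) auto
    then show False using a b by simp
  qed
qed

lemma Q_ev: "Qset h j \<in> pps.events" unfolding Qset_def by (rule ev) measurable
lemma R_ev: "Rset h j \<in> pps.events" unfolding Rset_def by (rule ev) measurable
lemma G_ev: "{\<omega>. Gd h \<delta> K Nr Ni \<omega>} \<in> pps.events" unfolding Gd_def rho_def by (rule ev) measurable

lemma main_lb:
  assumes h: "0 < h" and d: "0 < \<delta>" "\<delta> \<le> h" and K: "K = real J * h"
  shows "measure (model p v lam) {\<omega> \<in> space (model p v lam). zeta_under d \<omega> y z = 1} \<ge>
     (\<Sum>j<J. pps.prob (Qset h j)) + (\<Sum>j<J. pps.prob (Rset h j)) - badsum h \<delta> K Nr Ni"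
proof -
  define T where "T = {\<omega> \<in> space MM. zeta_under d \<omega> y z = 1}"
  define CQ where "CQ = (\<Union>j<J. Qset h j)"
  define CR where "CR = (\<Union>j<J. Rset h j)"
  define G where "G = {\<omega>. Gd h \<delta> K Nr Ni \<omega>}"
  have Tev: "T \<in> pps.events" unfolding T_def using target_sets[of p v lam d y z] model_eq by simp
  have CQev: "CQ \<in> pps.events" unfolding CQ_def using Q_ev by auto
  have CRev: "CR \<in> pps.events" unfolding CR_def using R_ev by auto
  have Gev: "G \<in> pps.events" unfolding G_def by (rule G_ev)
  have sub: "(CQ \<union> CR) \<inter> G \<subseteq> T"
  proof
    fix \<omega> assume "\<omega> \<in> (CQ \<union> CR) \<inter> G"
    then have G': "Gd h \<delta> K Nr Ni \<omega>" and "\<omega> \<in> CQ \<or> \<omega> \<in> CR" unfolding G_def by auto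
    then show "\<omega> \<in> T"
    proof (elim disjE)
      assume "\<omega> \<in> CQ"
      then obtain j where "\<omega> \<in> Qset h j" unfolding CQ_def by auto
      then show ?thesis using good_Q[OF h d(2) _ G'] unfolding T_def by (simp add: space_MM)
    next
      assume "\<omega> \<in> CR"
      then obtain j where "j < J" "\<omega> \<in> Rset h j" unfolding CR_def by auto
      then show ?thesis using good_R[OF h d(1) d(2) _ K _ G'] unfolding T_def by (simp add: space_MM)
    qed
  qed
  have disjQ: "disjoint_family_on (Qset h) {..<J}"
    unfolding disjoint_family_on_def Qset_def using interval_unique[OF h] by fastforce
  have disjR: "disjoint_family_on (Rset h) {..<J}"
    unfolding disjoint_family_on_def Rset_def using interval_unique[OF h] by fastforce
  have disjQR: "CQ \<inter> CR = {}"
  proof -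
    have "\<omega> (Tp {y,z}) < \<omega> (Xs y)" if "\<omega> \<in> Qset h j" for \<omega> j
    proof -
      have "(real j + 1) * h < (real j + 3) * h" using h by (intro mult_strict_right_mono) auto
      then show ?thesis using that unfolding Qset_def by auto
    qed
    note q = this
    have r: "\<omega> (Xs y) < \<omega> (Tp {y,z})" if "\<omega> \<in> Rset h j" for \<omega> j
      using that unfolding Rset_def by auto
    show ?thesis
    proof (rule equals0I)
      fix \<omega> assume "\<omega> \<in> CQ \<inter> CR"
      then obtain j j' where "\<omega> \<in> Qset h j" "\<omega> \<in> Rset h j'" unfolding CQ_def CR_def by auto
      then show False using q r by (meson less_asym)
    qed
  qed
  have mCQ: "pps.prob CQ = (\<Sum>j<J. pps.prob (Qset h j))"
    unfolding CQ_def using Q_ev disjQ by (intro pps.P.finite_measure_finite_Union) auto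
  have mCR: "pps.prob CR = (\<Sum>j<J. pps.prob (Rset h j))"
    unfolding CR_def using R_ev disjR by (intro pps.P.finite_measure_finite_Union) auto
  have mC: "pps.prob (CQ \<union> CR) = pps.prob CQ + pps.prob CR"
    using pps.P.finite_measure_Union[OF CQev CRev disjQR] .
  have "CQ \<union> CR \<subseteq> ((CQ \<union> CR) \<inter> G) \<union> (space MM - G)" by (auto simp: space_MM)
  then have "pps.prob (CQ \<union> CR) \<le> pps.prob (((CQ \<union> CR) \<inter> G) \<union> (space MM - G))"
    using CQev CRev Gev by (intro pps.P.finite_measure_mono) auto
  also have "\<dots> \<le> pps.prob ((CQ \<union> CR) \<inter> G) + pps.prob (space MM - G)"
    using CQev CRev Gev by (intro measure_Un_le) auto
  also have "pps.prob ((CQ \<union> CR) \<inter> G) \<le> pps.prob T"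
    using sub Tev by (rule pps.P.finite_measure_mono)
  also have "space MM - G = {\<omega>. \<not> Gd h \<delta> K Nr Ni \<omega>}" unfolding G_def by (auto simp: space_MM)
  also have "pps.prob \<dots> \<le> badsum h \<delta> K Nr Ni"
    using h d K by (intro bad_total) auto
  finally have "pps.prob (CQ \<union> CR) \<le> pps.prob T + badsum h \<delta> K Nr Ni" by simp
  then show ?thesis using mC mCQ mCR unfolding T_def model_eq by simp
qed

end


lemma erlang_CDF_bound:
  fixes l K :: real
  assumes l: "0 < l" and K: "0 \<le> K" and kk: "2 * K \<le> (real k + 1) / l"
  shows "erlang_CDF k l K \<le> 4 / (real k + 1)"
proof -
  define D where "D = density lborel (erlang_density k l)"
  interpret prob_space D unfolding D_def by (rule prob_space_erlang_density[OF l])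
  have dist: "distributed D lborel (\<lambda>x. x) (erlang_density k l)"
  proof (rule erlang_distributedI[OF _ l])
    show "(\<lambda>x. x) \<in> borel_measurable D" unfolding D_def by simp
    fix a :: real assume "0 \<le> a"
    have "{x \<in> space D. x \<le> a} = {..a}" unfolding D_def by auto
    then show "emeasure D {x \<in> space D. x \<le> a} = ennreal (erlang_CDF k l a)"
      unfolding D_def using emeasure_erlang_density[OF l] by simp
  qed
  define \<mu> where "\<mu> = (real k + 1) / l"
  have fk: "(fact k :: real) > 0" by simp
  have "expectation (\<lambda>x. x) = fact (k + 1) / (fact k * l)"
    using erlang_ith_moment[OF l dist, of 1] by simp
  also have "\<dots> = \<mu>" unfolding \<mu>_def using fk l by (simp add: fact_Suc field_simps)
  finally have mu: "expectation (\<lambda>x. x) = \<mu>" .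
  have var: "variance (\<lambda>x. x) = (real k + 1) / l\<^sup>2"
    using erlang_distributed_variance[OF l dist] by simp
  have mupos: "0 < \<mu>" unfolding \<mu>_def using l by simp
  have a: "\<mu> / 2 \<le> \<mu> - K" using kk unfolding \<mu>_def by simp
  have apos: "0 < \<mu> - K" using a mupos by simp
  have "prob {x \<in> space D. \<bar>x - expectation (\<lambda>x. x)\<bar> \<ge> \<mu> - K} \<le> variance (\<lambda>x. x) / (\<mu> - K)\<^sup>2"
    by (rule Chebyshev_inequality) (use erlang_ith_moment_integrable[OF l dist, of 2] apos in \<open>auto simp: D_def\<close>)
  moreover have "{x \<in> space D. x \<le> K} \<subseteq> {x \<in> space D. \<bar>x - expectation (\<lambda>x. x)\<bar> \<ge> \<mu> - K}"
    using mu by auto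
  then have "prob {x \<in> space D. x \<le> K} \<le> prob {x \<in> space D. \<bar>x - expectation (\<lambda>x. x)\<bar> \<ge> \<mu> - K}"
    by (intro finite_measure_mono) (auto simp: D_def)
  moreover have "prob {x \<in> space D. x \<le> K} = erlang_CDF k l K"
  proof -
    have "{x \<in> space D. x \<le> K} = {..K}" unfolding D_def by auto
    then have "emeasure D {x \<in> space D. x \<le> K} = ennreal (erlang_CDF k l K)"
      unfolding D_def using emeasure_erlang_density[OF l] by simp
    then show ?thesis using erlang_CDF_nonneg[OF l] by (simp add: emeasure_eq_measure)
  qed
  moreover have "variance (\<lambda>x. x) / (\<mu> - K)\<^sup>2 \<le> variance (\<lambda>x. x) / (\<mu> / 2)\<^sup>2"
    using a mupos var l by (intro divide_left_mono power_mono) (auto simp: power2_eq_square)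
  moreover have "variance (\<lambda>x. x) / (\<mu> / 2)\<^sup>2 = 4 / (real k + 1)"
  proof -
    have "variance (\<lambda>x. x) / (\<mu> / 2)\<^sup>2 = ((real k + 1) / l\<^sup>2) / (((real k + 1) / l) / 2)\<^sup>2"
      unfolding var \<mu>_def ..
    also have "\<dots> = 4 / (real k + 1)"
    proof -
      define c where "c = real k + 1"
      have c: "0 < c" unfolding c_def by simp
      have "(c / l\<^sup>2) / ((c / l) / 2)\<^sup>2 = 4 / c" using c l by (simp add: power2_eq_square field_simps)
      then show ?thesis unfolding c_def .
    qed
    finally show ?thesis .
  qed
  ultimately show ?thesis by linarith
qed


definition tQ :: "real \<Rightarrow> real \<Rightarrow> nat \<Rightarrow> real" where
  "tQ a h j = (exp (- a * (real j * h)) - exp (- a * ((real j + 1) * h))) * exp (- ((real j + 3) * h))"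

definition tR :: "real \<Rightarrow> real \<Rightarrow> real \<Rightarrow> nat \<Rightarrow> real" where
  "tR a b h j = (exp (- h) - exp (- (real j * h))) * (exp (- a * (real j * h)) - exp (- a * ((real j + 1) * h)))
     * exp (- b * ((real j + 2) * h))"

definition gQ :: "real \<Rightarrow> real \<Rightarrow> real" where
  "gQ a h = (1 - exp (- a * h)) * exp (- 3 * h) / (1 - exp (- (a + 1) * h))"

definition gR :: "real \<Rightarrow> real \<Rightarrow> real \<Rightarrow> real" where
  "gR a b h = (1 - exp (- a * h)) * exp (- 2 * b * h) * (exp (- h) / (1 - exp (- (a + b) * h)) - 1 / (1 - exp (- (a + b + 1) * h)))"

lemma tQ_eq: "tQ a h j = (1 - exp (- a * h)) * exp (- 3 * h) * exp (- (a + 1) * h) ^ j"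
  unfolding tQ_def by (simp add: exp_of_nat_mult[symmetric] exp_add[symmetric] algebra_simps)

lemma tR_eq: "tR a b h j = (1 - exp (- a * h)) * exp (- 2 * b * h) *
   (exp (- h) * exp (- (a + b) * h) ^ j - exp (- (a + b + 1) * h) ^ j)"
  unfolding tR_def by (simp add: exp_of_nat_mult[symmetric] exp_add[symmetric] algebra_simps)

lemma tQ_sums: assumes "0 < a" "0 < h" shows "tQ a h sums gQ a h"
proof -
  have "norm (exp (- (a + 1) * h)) < 1" using assms by (simp add: mult_neg_pos)
  then have "(\<lambda>j. exp (- (a + 1) * h) ^ j) sums (1 / (1 - exp (- (a + 1) * h)))" by (rule geometric_sums)
  then have "(\<lambda>j. (1 - exp (- a * h)) * exp (- 3 * h) * exp (- (a + 1) * h) ^ j) sums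
     ((1 - exp (- a * h)) * exp (- 3 * h) * (1 / (1 - exp (- (a + 1) * h))))" by (rule sums_mult)
  then show ?thesis unfolding tQ_eq[abs_def] gQ_def by simp
qed

lemma tR_sums: assumes "0 < a" "0 \<le> b" "0 < h" shows "tR a b h sums gR a b h"
proof -
  have q1: "norm (exp (- (a + b) * h)) < 1" using assms by (simp add: mult_neg_pos)
  have q2: "norm (exp (- (a + b + 1) * h)) < 1" using assms by (simp add: mult_neg_pos)
  have "(\<lambda>j. exp (- h) * exp (- (a + b) * h) ^ j - exp (- (a + b + 1) * h) ^ j) sums
      (exp (- h) * (1 / (1 - exp (- (a + b) * h))) - 1 / (1 - exp (- (a + b + 1) * h)))"
    by (intro sums_diff sums_mult geometric_sums q1 q2)
  then have "(\<lambda>j. (1 - exp (- a * h)) * exp (- 2 * b * h) * (exp (- h) * exp (- (a + b) * h) ^ j - exp (- (a + b + 1) * h) ^ j)) sums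
     ((1 - exp (- a * h)) * exp (- 2 * b * h) * (exp (- h) * (1 / (1 - exp (- (a + b) * h))) - 1 / (1 - exp (- (a + b + 1) * h))))"
    by (rule sums_mult)
  then show ?thesis unfolding tR_eq[abs_def] gR_def by simp
qed

lemma g_lim:
  assumes a: "0 < a" and b: "0 < b" and c: "0 < c" and D: "0 \<le> Dm"
  shows "((\<lambda>h. gQ a h + gR a b h - ((1 - exp (- c * h)) + (1 - exp (- h)) + Dm * (1 - exp (- (2 * h)))))
     \<longlongrightarrow> a / (a + 1) + (a / (a + b) - a / (a + b + 1))) (at_right 0)"
  unfolding gQ_def gR_def using a b c D by (real_asymp simp: field_simps)


definition BD :: "real \<Rightarrow> real \<Rightarrow> real \<Rightarrow> real \<Rightarrow> real \<Rightarrow> real \<Rightarrow> nat \<Rightarrow> nat \<Rightarrow> real \<Rightarrow> real" where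
  "BD Dm a c h \<delta> K Nr Ni lam = exp (- lam * \<delta>) + (1 - exp (- c * h)) + (1 - exp (- h))
    + Dm * exp (- lam * \<delta>) + Dm * (1 - exp (- (2*h))) + 0
    + (Dm + 1) * (real Nr + 1) * (1 - exp (- (2*\<delta>))) + (Dm + 1) * erlang_CDF Nr 1 K
    + Dm * (real Ni + 1) * exp (- lam * \<delta>) + Dm * erlang_CDF Ni lam K
    + Dm * (real Nr + 2)^2 * (4*\<delta>) + (real Nr + 2) * (2 * \<delta> * a)"

lemma select:
  fixes a c Dm r :: real
  assumes a: "0 < a" and c: "0 < c" and D: "1 \<le> Dm"
    and r: "r < a / (a + 1) + (a / (a + c * Dm) - a / (a + c * Dm + 1))"
  shows "\<exists>h J Nr \<delta> lam0. 0 < h \<and> 0 < \<delta> \<and> \<delta> \<le> h \<and> 0 < lam0 \<and>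
    (\<forall>lam \<ge> lam0. r \<le> (\<Sum>j<J. tQ a h j) + (\<Sum>j<J. tR a (c * Dm) h j)
        - BD Dm a c h \<delta> (real J * h) Nr (nat \<lceil>2 * lam * (real J * h)\<rceil>) lam)"
proof -
  define b where "b = c * Dm"
  have b: "0 < b" unfolding b_def using c D by simp
  define L where "L = a / (a + 1) + (a / (a + b) - a / (a + b + 1))"
  define \<epsilon> where "\<epsilon> = (L - r) / 5"
  have eps: "0 < \<epsilon>" unfolding \<epsilon>_def L_def b_def using r by simp
  define hb where "hb h = (1 - exp (- c * h)) + (1 - exp (- h)) + Dm * (1 - exp (- (2 * h)))" for h
    have lim1: "((\<lambda>h. gQ a h + gR a b h - hb h) \<longlongrightarrow> L) (at_right 0)"
    unfolding hb_def L_def using g_lim[OF a b c] D by simp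
  have "eventually (\<lambda>h. L - \<epsilon> < gQ a h + gR a b h - hb h) (at_right 0)"
    using order_tendstoD(1)[OF lim1, of "L - \<epsilon>"] eps by simp
  then obtain h0 where h0: "0 < h0" "\<And>h. 0 < h \<Longrightarrow> h < h0 \<Longrightarrow> L - \<epsilon> < gQ a h + gR a b h - hb h"
    unfolding eventually_at_right[OF zero_less_one] by (metis)
  define h where "h = h0 / 2"
  have h: "0 < h" and gh: "L - \<epsilon> < gQ a h + gR a b h - hb h" using h0 unfolding h_def by auto
    have "(\<lambda>j. tQ a h j + tR a b h j) sums (gQ a h + gR a b h)"
    using tQ_sums[OF a h] tR_sums[OF a _ h] b by (intro sums_add) auto
  then have "(\<lambda>J. \<Sum>j<J. tQ a h j + tR a b h j) \<longlonglongrightarrow> gQ a h + gR a b h" unfolding sums_def .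
  then have "eventually (\<lambda>J. gQ a h + gR a b h - \<epsilon> < (\<Sum>j<J. tQ a h j + tR a b h j)) sequentially"
    using eps by (intro order_tendstoD(1)) auto
  moreover have "eventually (\<lambda>J. 1 \<le> J) sequentially" by (rule eventually_ge_at_top)
  ultimately obtain J where J: "gQ a h + gR a b h - \<epsilon> < (\<Sum>j<J. tQ a h j + tR a b h j)" "1 \<le> J"
    using eventually_sequentially by (metis (mono_tags, lifting) eventually_conj_iff eventually_happens' sequentially_bot)
  define K where "K = real J * h"
  have K: "0 < K" unfolding K_def using J h by simp
    define Nr where "Nr = nat \<lceil>max (2 * K) (8 * (Dm + 1) / \<epsilon>)\<rceil>"
  have Nr1: "2 * K \<le> real Nr + 1" "8 * (Dm + 1) / \<epsilon> \<le> real Nr + 1" unfolding Nr_def by linarith+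
  have cdf1: "erlang_CDF Nr 1 K \<le> 4 / (real Nr + 1)" using erlang_CDF_bound[of 1 K Nr] K Nr1 by simp
  have S3: "(Dm + 1) * erlang_CDF Nr 1 K < \<epsilon>"
  proof -
    have "(Dm + 1) * erlang_CDF Nr 1 K \<le> (Dm + 1) * (4 / (real Nr + 1))" using cdf1 D by (intro mult_left_mono) auto
    also have "\<dots> \<le> \<epsilon> / 2"
    proof -
      have "8 * (Dm + 1) \<le> \<epsilon> * (real Nr + 1)" using Nr1(2) eps by (simp add: field_simps)
      then show ?thesis by (simp add: field_simps)
    qed
    finally show ?thesis using eps by simp
  qed
    define F where "F \<delta> = (Dm + 1) * (real Nr + 1) * (1 - exp (- (2*\<delta>))) + Dm * (real Nr + 2)^2 * (4*\<delta>) + (real Nr + 2) * (2 * \<delta> * a)" for \<delta>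
  have "(F \<longlongrightarrow> 0) (at_right 0)" unfolding F_def by real_asymp
  then have "eventually (\<lambda>\<delta>. F \<delta> < \<epsilon>) (at_right 0)" using eps by (intro order_tendstoD(2)) auto
  then obtain d0 where d0: "0 < d0" "\<And>\<delta>. 0 < \<delta> \<Longrightarrow> \<delta> < d0 \<Longrightarrow> F \<delta> < \<epsilon>"
    unfolding eventually_at_right[OF zero_less_one] by metis
  define \<delta> where "\<delta> = min (d0 / 2) h"
  have d: "0 < \<delta>" "\<delta> \<le> h" and S4: "F \<delta> < \<epsilon>" using d0 h unfolding \<delta>_def by auto
    define H where "H lam = (1 + Dm) * exp (- lam * \<delta>) + Dm * (2 * lam * K + 2) * exp (- lam * \<delta>) + Dm * (2 / (lam * K))" for lam
  have "(H \<longlongrightarrow> 0) at_top" unfolding H_def using d K by real_asymp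
  then have "eventually (\<lambda>lam. H lam < \<epsilon>) at_top" using eps by (intro order_tendstoD(2)) auto
  then obtain lam1 where lam1: "\<And>lam. lam1 \<le> lam \<Longrightarrow> H lam < \<epsilon>" unfolding eventually_at_top_linorder by metis
  define lam0 where "lam0 = max lam1 1"
  have lam0: "0 < lam0" unfolding lam0_def by simp
  have main: "r \<le> (\<Sum>j<J. tQ a h j) + (\<Sum>j<J. tR a b h j) - BD Dm a c h \<delta> K Nr (nat \<lceil>2 * lam * K\<rceil>) lam"
    if lam: "lam0 \<le> lam" for lam
  proof -
    define Ni where "Ni = nat \<lceil>2 * lam * K\<rceil>"
    have lpos: "0 < lam" using lam lam0 by simp
    have x0: "0 \<le> 2 * lam * K" using lpos K by simp
    have Nieq: "real Ni = real_of_int \<lceil>2 * lam * K\<rceil>" unfolding Ni_def using x0 by simp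
    have Ni: "2 * lam * K \<le> real Ni" "real Ni \<le> 2 * lam * K + 1" unfolding Nieq
      using le_of_int_ceiling[of "2 * lam * K"] of_int_ceiling_le_add_one[of "2 * lam * K"] by auto
    have cdf2: "erlang_CDF Ni lam K \<le> 4 / (real Ni + 1)"
    proof (rule erlang_CDF_bound[OF lpos])
      show "0 \<le> K" using K by simp
      show "2 * K \<le> (real Ni + 1) / lam" using Ni lpos by (simp add: field_simps)
    qed
    have "4 / (real Ni + 1) \<le> 4 / (2 * lam * K)" using Ni lpos K by (intro divide_left_mono) auto
    also have "\<dots> = 2 / (lam * K)" by simp
    finally have cdf3: "Dm * erlang_CDF Ni lam K \<le> Dm * (2 / (lam * K))" using cdf2 D by (intro mult_left_mono) auto
    have e1: "Dm * (real Ni + 1) * exp (- lam * \<delta>) \<le> Dm * (2 * lam * K + 2) * exp (- lam * \<delta>)"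
      using Ni D by (intro mult_right_mono mult_left_mono) auto
    have HS: "H lam < \<epsilon>" using lam1 lam unfolding lam0_def by simp
    have BDeq: "BD Dm a c h \<delta> K Nr Ni lam = (exp (- lam * \<delta>) + Dm * exp (- lam * \<delta>) + Dm * (real Ni + 1) * exp (- lam * \<delta>)
       + Dm * erlang_CDF Ni lam K) + hb h + F \<delta> + (Dm + 1) * erlang_CDF Nr 1 K"
      unfolding BD_def hb_def F_def by (simp add: algebra_simps)
    have "BD Dm a c h \<delta> K Nr Ni lam < \<epsilon> + hb h + \<epsilon> + \<epsilon>"
      using BDeq HS cdf3 e1 S4 S3 unfolding H_def by (simp add: algebra_simps)
    moreover have "(\<Sum>j<J. tQ a h j) + (\<Sum>j<J. tR a b h j) = (\<Sum>j<J. tQ a h j + tR a b h j)"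
      by (simp add: sum.distrib)
    moreover have "L - 5 * \<epsilon> = r" unfolding \<epsilon>_def by (simp add: field_simps)
    ultimately show ?thesis using J(1) gh unfolding Ni_def by linarith
  qed
  show ?thesis
    using h d lam0 main unfolding K_def b_def by blast
qed


lemma pow_ineq: "2 \<le> d \<Longrightarrow> (3::nat) ^ d \<le> 2 ^ (2 * d - 1) * (2 * d - 1)"
proof (induction d rule: dec_induct)
  case base
  then show ?case by simp
next
  case (step n)
  have "(3::nat) ^ Suc n = 3 * 3 ^ n" by simp
  also have "\<dots> \<le> 3 * (2 ^ (2 * n - 1) * (2 * n - 1))" using step.IH by simp
  also have "\<dots> \<le> 4 * (2 ^ (2 * n - 1) * (2 * n - 1))" by simp
  also have "\<dots> = 2 ^ (2 * n + 1) * (2 * n - 1)"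
  proof -
    define m where "m = 2 * n - 1"
    have "2 * n + 1 = m + 2" using step.hyps unfolding m_def by simp
    then have "(2::nat) ^ (2 * n + 1) = 2 ^ m * 4" by (simp add: power_add)
    then show ?thesis unfolding m_def by simp
  qed
  also have "\<dots> \<le> 2 ^ (2 * Suc n - 1) * (2 * Suc n - 1)"
    using step.hyps by (intro mult_mono) auto
  finally show ?case .
qed

context concrete
begin

lemma probR_Dm:
  assumes h: "0 < h" and Dm: "real (card NN) \<le> Dm"
  shows "pps.prob (Rset h j) \<ge> tR (v * p) (v * (1 - p) * Dm) h j"
proof (cases "j = 0")
  case True
  have "exp (- h) - exp (- (real j * h)) \<le> 0" using True h by simp
  moreover have "0 \<le> exp (- (v * p) * (real j * h)) - exp (- (v * p) * ((real j + 1) * h))"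
    using h p0 v0 by (simp add: mult_pos_pos)
  ultimately have "tR (v * p) (v * (1 - p) * Dm) h j \<le> 0"
    unfolding tR_def by (simp add: mult_nonpos_nonneg)
  then show ?thesis by (rule order_trans[OF _ measure_nonneg])
next
  case False
  then have j1: "1 \<le> real j" by simp
  have X1: "0 \<le> exp (- h) - exp (- (real j * h))" using j1 h by (simp add: mult_le_cancel_right1)
  have X2: "0 \<le> exp (- (v * p) * (real j * h)) - exp (- (v * p) * ((real j + 1) * h))"
    using h p0 v0 by (simp add: mult_pos_pos)
  have X3: "exp (- (v * (1 - p) * Dm) * ((real j + 2) * h)) \<le> exp (- (v * (1 - p)) * card NN * ((real j + 2) * h))"
  proof -
    have "0 \<le> v * (1 - p) * ((real j + 2) * h)" using v0 p1 h by simp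
    then have "v * (1 - p) * ((real j + 2) * h) * card NN \<le> v * (1 - p) * ((real j + 2) * h) * Dm"
      using Dm by (intro mult_left_mono) auto
    then show ?thesis by (simp add: algebra_simps)
  qed
  have "tR (v * p) (v * (1 - p) * Dm) h j \<le> (exp (- h) - exp (- (real j * h))) * (exp (- (v * p) * (real j * h)) - exp (- (v * p) * ((real j + 1) * h)))
           * exp (- (v * (1 - p)) * card NN * ((real j + 2) * h))"
    unfolding tR_def using X1 X2 X3 by (intro mult_left_mono) (auto intro: mult_nonneg_nonneg)
  also have "\<dots> \<le> pps.prob (Rset h j)" by (rule probR[OF h])
  finally show ?thesis .
qed

lemma badsum_Dm:
  assumes h: "0 < h" and d: "0 < \<delta>" and Dm: "real (card NN) \<le> Dm"
  shows "badsum h \<delta> K Nr Ni \<le> BD Dm (v * p) (v * (1 - p)) h \<delta> K Nr Ni lam"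
proof -
  define A where "A = exp (- lam * \<delta>) + (1 - exp (- (v * (1 - p)) * h)) + (1 - exp (- h))
      + (real Nr + 1) * (1 - exp (- (2*\<delta>))) + erlang_CDF Nr 1 K + (real Nr + 2) * (2 * \<delta> * (v * p))"
  define B where "B = exp (- lam * \<delta>) + (1 - exp (- (2*h))) + (real Nr + 1) * (1 - exp (- (2*\<delta>)))
      + erlang_CDF Nr 1 K + (real Ni + 1) * exp (- lam * \<delta>) + erlang_CDF Ni lam K + (real Nr + 2)^2 * (4*\<delta>)"
  have e1: "badsum h \<delta> K Nr Ni = A + real (card NN) * B" unfolding badsum_def A_def B_def by (simp add: algebra_simps)
  have e2: "BD Dm (v * p) (v * (1 - p)) h \<delta> K Nr Ni lam = A + Dm * B" unfolding BD_def A_def B_def by (simp add: algebra_simps)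
  have "0 \<le> erlang_CDF Nr 1 K" "0 \<le> erlang_CDF Ni lam K" using lam0 by simp_all
  then have B: "0 \<le> B" unfolding B_def using h d by (intro add_nonneg_nonneg mult_nonneg_nonneg) auto
  have "real (card NN) * B \<le> Dm * B" using Dm B by (rule mult_right_mono)
  then show ?thesis unfolding e1 e2 by simp
qed

end

theorem lemma1:
  fixes d :: nat and p v r :: real
  assumes "d \<ge> 2" and "0 < p" and "p < 1" and "0 < v" and "0 < r"
    and "r < 1 / 2 ^ (2 * d - 1) * (p / (1 + (2 * real d - 2) * (1 - p)))"
  shows "\<exists>lam0 > 0. \<forall>lam \<ge> lam0. \<forall>(y, z) \<in> Es d.
           measure (model p v lam) {\<omega> \<in> space (model p v lam). zeta_under d \<omega> y z = 1} \<ge> r"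
proof -
  note d2 = assms(1) and p0 = assms(2) and p1 = assms(3) and v0 = assms(4) and rr = assms(6)
  define a where "a = v * p"
  define c where "c = v * (1 - p)"
  define Dm :: real where "Dm = 3 ^ d"
  have a: "0 < a" unfolding a_def using p0 v0 by simp
  have c: "0 < c" unfolding c_def using p1 v0 by simp
  have D: "1 \<le> Dm" unfolding Dm_def by simp
    have rL: "r < a / (a + 1) + (a / (a + c * Dm) - a / (a + c * Dm + 1))"
  proof -
    have cD: "0 < c * Dm" using c D by simp
    have q1: "0 < a + c * Dm + 1" "0 < a + 1" "a + 1 \<le> a + c * Dm + 1" using a cD by auto
    have "a / (a + c * Dm + 1) \<le> a / (a + 1)"
      using a q1 by (intro divide_left_mono) (auto intro: mult_pos_pos)
    then have L1: "a / (a + c * Dm) \<le> a / (a + 1) + (a / (a + c * Dm) - a / (a + c * Dm + 1))" by simp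
    have eqa: "a / (a + c * Dm) = p / (p + (1 - p) * Dm)"
    proof -
      have "a + c * Dm = v * (p + (1 - p) * Dm)" unfolding a_def c_def by (simp add: algebra_simps)
      then have "a / (a + c * Dm) = (v * p) / (v * (p + (1 - p) * Dm))" unfolding a_def by simp
      also have "\<dots> = p / (p + (1 - p) * Dm)" using v0 by (simp add: mult_divide_mult_cancel_left_if)
      finally show ?thesis .
    qed
    have pw: "real (3 ^ d) \<le> 2 ^ (2 * d - 1) * (2 * real d - 1)"
    proof -
      have "real (3 ^ d) \<le> real (2 ^ (2 * d - 1) * (2 * d - 1))" using pow_ineq[OF d2] by (simp only: of_nat_le_iff)
      also have "\<dots> = 2 ^ (2 * d - 1) * (2 * real d - 1)" using d2 by (simp add: of_nat_diff)
      finally show ?thesis .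
    qed
    have pw1: "(1::real) \<le> 2 ^ (2 * d - 1)" by simp
    have den1: "0 < 1 + (2 * real d - 2) * (1 - p)" using d2 p1 by (simp add: add_pos_nonneg)
    have den2: "0 < p + (1 - p) * Dm" using p0 p1 D by (simp add: add_pos_nonneg)
    have key: "p + (1 - p) * Dm \<le> 2 ^ (2 * d - 1) * (1 + (2 * real d - 2) * (1 - p))"
    proof -
      have "(1 - p) * Dm \<le> (1 - p) * (2 ^ (2 * d - 1) * (2 * real d - 1))"
        using pw p1 unfolding Dm_def by (intro mult_left_mono) auto
      moreover have "p \<le> 2 ^ (2 * d - 1) * p" using pw1 p0 by simp
      moreover have "2 ^ (2 * d - 1) * (1 + (2 * real d - 2) * (1 - p)) = 2 ^ (2 * d - 1) * p + (1 - p) * (2 ^ (2 * d - 1) * (2 * real d - 1))"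
        by (simp add: algebra_simps)
      ultimately show ?thesis by linarith
    qed
    have "1 / 2 ^ (2 * d - 1) * (p / (1 + (2 * real d - 2) * (1 - p))) = p / (2 ^ (2 * d - 1) * (1 + (2 * real d - 2) * (1 - p)))"
      by simp
    also have "\<dots> \<le> p / (p + (1 - p) * Dm)"
      using key den1 den2 p0 by (intro divide_left_mono) auto
    finally show ?thesis using rr L1 eqa by linarith
  qed
  obtain h J Nr \<delta> lam0 where sel: "0 < h" "0 < \<delta>" "\<delta> \<le> h" "0 < lam0"
    "\<And>lam. lam0 \<le> lam \<Longrightarrow> r \<le> (\<Sum>j<J. tQ a h j) + (\<Sum>j<J. tR a (c * Dm) h j)
        - BD Dm a c h \<delta> (real J * h) Nr (nat \<lceil>2 * lam * (real J * h)\<rceil>) lam"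
    using select[OF a c D rL] by blast
  show ?thesis
  proof (intro exI[of _ lam0] conjI allI impI ballI)
    show "0 < lam0" by fact
    fix lam :: real and yz assume lam: "lam0 \<le> lam" and yz: "yz \<in> Es d"
    obtain y z where yzeq: "yz = (y, z)" by (cases yz)
    have lpos: "0 < lam" using lam sel(4) by simp
    interpret C: concrete p v lam d y z
      by unfold_locales (use p0 p1 v0 lpos in auto)
    define K where "K = real J * h"
    define Ni where "Ni = nat \<lceil>2 * lam * K\<rceil>"
    have Dm': "real (card C.NN) \<le> Dm" unfolding Dm_def using C.NN_card by (metis of_nat_le_iff of_nat_numeral of_nat_power)
    have "measure (model p v lam) {\<omega> \<in> space (model p v lam). zeta_under d \<omega> y z = 1} \<ge>
       (\<Sum>j<J. C.pps.prob (C.Qset h j)) + (\<Sum>j<J. C.pps.prob (C.Rset h j)) - C.badsum h \<delta> K Nr Ni"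
      using C.main_lb[OF sel(1) sel(2) sel(3), of K J Nr Ni] unfolding K_def by simp
    moreover have "(\<Sum>j<J. C.pps.prob (C.Qset h j)) = (\<Sum>j<J. tQ a h j)"
      using C.probQ[OF sel(1)] unfolding tQ_def a_def by simp
    moreover have "(\<Sum>j<J. C.pps.prob (C.Rset h j)) \<ge> (\<Sum>j<J. tR a (c * Dm) h j)"
      using C.probR_Dm[OF sel(1) Dm'] unfolding a_def c_def by (intro sum_mono) simp
    moreover have "C.badsum h \<delta> K Nr Ni \<le> BD Dm a c h \<delta> K Nr Ni lam"
      unfolding a_def c_def by (rule C.badsum_Dm[OF sel(1) sel(2) Dm'])
    moreover have "r \<le> (\<Sum>j<J. tQ a h j) + (\<Sum>j<J. tR a (c * Dm) h j) - BD Dm a c h \<delta> K Nr Ni lam"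
      using sel(5)[OF lam] unfolding K_def Ni_def .
    ultimately have "r \<le> measure (model p v lam) {\<omega> \<in> space (model p v lam). zeta_under d \<omega> y z = 1}"
      by simp
    then show "case yz of (y, z) \<Rightarrow> r \<le> measure (model p v lam) {\<omega> \<in> space (model p v lam). zeta_under d \<omega> y z = 1}"
      unfolding yzeq by simp
  qed
qed


end
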